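(* Consider one round $t$ of the following federated learning protocol with $N$ clients and a trusted parameter server (PS), model dimension $m$, clipping threshold $C>0$, noise parameter $\sigma>0$ and sampling probability $p\in(0,1]$. Each client $i\in[N]$ holds a local dataset $\mathcal{D}_i$ and forms a batch $\mathcal{B}_{i,t}\subseteq\mathcal{D}_i$ by Poisson sampling (each sample is included independently with probability $p$); the average batch size is $B=p|\mathcal{D}_i|$. For each $d\in\mathcal{B}_{i,t}$ the client computes the per-sample gradient $\nabla\ell(\mathbf{w}_t,d)\in\mathbb{R}^m$ and clips it to $\nabla\ell(\mathbf{w}_t,d)/\max\{1,\|\nabla\ell(\mathbf{w}_t,d)\|_2/C\}$, and then forms $\bar{\mathbf{g}}_{i,t}=\frac{1}{B}\sum_{d\in\mathcal{B}_{i,t}}\nabla\ell(\mathbf{w}_t,d)$ (with clipped gradients). For each coordinate $j\in[m]$, client $i$ samples $v_{i,j}\sim\Gamma[3/2,1/2]$ (gamma distribution with shape $3/2$ and rate $1/2$), sets $\Delta_{i,j}=2\sigma\sqrt{v_{i,j}}$, samples $U_{i,j}\sim\mathrm{Unif}(-\Delta_{i,j}/2,\Delta_{i,j}/2)$, and sends to the PS the quantized value $Q_{\Delta_{i,j}}\big((\bar{\mathbf{g}}_{i,t})_j+U_{i,j}\big)$, where $Q_\Delta(x)=\mathrm{round}\!\left(\frac{x-\Delta/2}{\Delta}\right)\Delta+\frac{\Delta}{2}$ and $\mathrm{round}$ rounds to the nearest integer. All $v_{i,j}$ and $U_{i,j}$ are sampled independently (over $i$ and $j$) and are shared with the PS via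 common randomness between client $i$ and the PS, but are unknown to every other client. The PS forms the estimate $(\hat{\mathbf{g}}_{i,t})_j=Q_{\Delta_{i,j}}\big((\bar{\mathbf{g}}_{i,t})_j+U_{i,j}\big)-U_{i,j}$ and the global average $\mathbf{g}=\frac{1}{N}\sum_{i\in[N]}\hat{\mathbf{g}}_{i,t}$. Then, from the perspective of any party not having access to the shared randomness $(v_{i,j},U_{i,j})$, $\mathbf{g}$ is a noisy estimate of the average of the local gradients of the form $$\mathbf{g}=\frac{1}{N}\sum_{i\in[N]}\bar{\mathbf{g}}_{i,t}+\mathcal{N}\!\left(0,\frac{\sigma^2}{N}\mathbf{I}_m\right).$$ Hence, for every $\varepsilon'>0$, $\mathbf{g}$ satisfies sample-level $(\varepsilon,\delta)$-differential privacy against the clients with $\varepsilon=\log\big(1+p(e^{\varepsilon'}-1)\big)$ and $$\delta=p\cdot\Phi\!\left(\frac{C}{\sigma B\sqrt{N}}-\frac{\varepsilon'\sigma B\sqrt{N}}{2C}\right)-p\cdot e^{\varepsilon'}\Phi\!\left(-\frac{C}{\sigma B\sqrt{N}}-\frac{\varepsilon'\sigma B\sqrt{N}}{2C}\right),$$ where $\Phi$ is the CDF of the standard normal distribution.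
   Context: A randomized algorithm $\mathcal{M}$ satisfies $(\varepsilon,\delta)$-DP ($\varepsilon>0$, $\delta\in[0,1)$) if $\Pr[\mathcal{M}(\mathcal{D})\in\mathcal{O}]\le e^{\varepsilon}\Pr[\mathcal{M}(\mathcal{D}')\in\mathcal{O}]+\delta$ for all datasets $\mathcal{D},\mathcal{D}'$ differing in one sample and all measurable output sets $\mathcal{O}$. "Sample-level DP against clients" means the mechanism mapping the union of the clients' datasets to $\mathbf{g}$ (with randomness from Poisson sampling and from the $v_{i,j},U_{i,j}$, which are hidden) satisfies this definition, where neighboring datasets differ in a single data sample. The loss gradient $\nabla\ell(\mathbf{w}_t,d)$ is the gradient of the per-sample loss with respect to the current model parameters $\mathbf{w}_t\in\mathbb{R}^m$. *)

theory Defs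
  imports "HOL-Probability.Probability"
begin

definition gamma_density :: "real \<Rightarrow> real \<Rightarrow> real \<Rightarrow> real" where
  "gamma_density k r x = (if 0 < x then r powr k * x powr (k - 1) * exp (- r * x) / Gamma k else 0)"

definition Phi :: "real \<Rightarrow> real" where
  "Phi x = measure (density lborel std_normal_density) {..x}"

definition clip :: "real \<Rightarrow> real ^ 'm \<Rightarrow> real ^ 'm" where
  "clip C x = (1 / max 1 (norm x / C)) *\<^sub>R x"

definition quant :: "real \<Rightarrow> real \<Rightarrow> real" where
  "quant \<Delta> x = real_of_int (round ((x - \<Delta>/2) / \<Delta>)) * \<Delta> + \<Delta>/2"

definition step :: "real \<Rightarrow> real \<Rightarrow> real" where
  "step \<sigma> v = 2 * \<sigma> * sqrt v"

text \<open>Joint law of one pair (v, U): v ~ Gamma(3/2, rate 1/2) and, given v,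
  U ~ Unif(-Delta/2, Delta/2) with Delta = step sigma v.\<close>
definition pair_law :: "real \<Rightarrow> (real \<times> real) measure" where
  "pair_law \<sigma> = density lborel (\<lambda>(v, u). ennreal (gamma_density (3/2) (1/2) v *
      (if 0 < v \<and> - step \<sigma> v / 2 < u \<and> u < step \<sigma> v / 2 then 1 / step \<sigma> v else 0)))"

definition shared_rand :: "nat \<Rightarrow> real \<Rightarrow> ((nat \<times> 'm::finite) \<Rightarrow> real \<times> real) measure" where
  "shared_rand N \<sigma> = PiM ({..<N} \<times> UNIV) (\<lambda>_. pair_law \<sigma>)"

definition aggregate :: "nat \<Rightarrow> real \<Rightarrow> (nat \<Rightarrow> real ^ 'm::finite) \<Rightarrow>
    ((nat \<times> 'm) \<Rightarrow> real \<times> real) \<Rightarrow> real ^ 'm" where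
  "aggregate N \<sigma> gbar \<omega> = (1 / real N) *\<^sub>R (\<Sum>i<N. (\<chi> j.
      quant (step \<sigma> (fst (\<omega> (i, j)))) (gbar i $ j + snd (\<omega> (i, j))) - snd (\<omega> (i, j))))"

text \<open>Poisson sampling masks: sample k of client i is in the batch iff b (i,k).\<close>
definition poisson_masks :: "real \<Rightarrow> nat \<Rightarrow> (nat \<Rightarrow> 'd list) \<Rightarrow> ((nat \<times> nat) \<Rightarrow> bool) measure" where
  "poisson_masks p N D = PiM {(i, k). i < N \<and> k < length (D i)} (\<lambda>_. measure_pmf (bernoulli_pmf p))"

definition local_grad :: "real \<Rightarrow> real \<Rightarrow> ('d \<Rightarrow> real ^ 'm) \<Rightarrow> (nat \<Rightarrow> 'd list) \<Rightarrow>
    ((nat \<times> nat) \<Rightarrow> bool) \<Rightarrow> nat \<Rightarrow> real ^ 'm" where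
  "local_grad C B grad D b i = (1 / B) *\<^sub>R (\<Sum>k\<in>{k. k < length (D i) \<and> b (i, k)}. clip C (grad (D i ! k)))"

definition mechanism :: "nat \<Rightarrow> real \<Rightarrow> real \<Rightarrow> real \<Rightarrow> real \<Rightarrow> ('d \<Rightarrow> real ^ 'm::finite) \<Rightarrow>
    (nat \<Rightarrow> 'd list) \<Rightarrow> (real ^ 'm) measure" where
  "mechanism N C \<sigma> p B grad D =
     distr (poisson_masks p N D \<Otimes>\<^sub>M shared_rand N \<sigma>) borel
       (\<lambda>(b, \<omega>). aggregate N \<sigma> (local_grad C B grad D b) \<omega>)"

definition neighbours :: "nat \<Rightarrow> (nat \<Rightarrow> 'd list) \<Rightarrow> (nat \<Rightarrow> 'd list) \<Rightarrow> bool" where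
  "neighbours N D D' \<longleftrightarrow> (\<exists>i0<N. \<exists>k<length (D i0). \<exists>d'.
      D' i0 = (D i0)[k := d'] \<and> (\<forall>i<N. i \<noteq> i0 \<longrightarrow> D' i = D i))"

definition gaussian_vec :: "real ^ 'm::finite \<Rightarrow> real \<Rightarrow> (real ^ 'm) measure" where
  "gaussian_vec \<mu> s = density lborel (\<lambda>x. ennreal (\<Prod>j\<in>UNIV. normal_density (\<mu> $ j) s (x $ j)))"

end

theory Submission
  imports Defs "HOL-Real_Asymp.Real_Asymp"
begin

lemma measurable_vec_lambda_real[measurable (raw)]:
  fixes f :: "'a \<Rightarrow> 'm::finite \<Rightarrow> real"
  assumes "\<And>j. (\<lambda>x. f x j) \<in> borel_measurable M"
  shows "(\<lambda>x. \<chi> j. f x j) \<in> borel_measurable M"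
proof (subst borel_measurable_euclidean_space, intro ballI)
  fix i :: "real^'m" assume "i \<in> Basis"
  then obtain j where i: "i = axis j 1" by (auto simp: Basis_vec_def)
  show "(\<lambda>x. (\<chi> j. f x j) \<bullet> i) \<in> borel_measurable M"
    using assms[of j] by (simp add: i inner_axis)
qed

lemma measurable_vec_nth_real[measurable]:
  "(\<lambda>x::real^'m::finite. x $ j) \<in> borel_measurable borel"
  by (intro borel_measurable_continuous_onI continuous_intros)

lemma lborel_vec:
  "(lborel :: (real^'m::finite) measure) = distr (PiM UNIV (\<lambda>_. lborel)) borel (\<lambda>f. \<chi> j. f j)"
proof (rule lborel_eqI)
  interpret product_sigma_finite "\<lambda>_::'m. lborel :: real measure" by standard
  fix l u :: "real^'m" assume le: "\<And>b. b \<in> Basis \<Longrightarrow> l \<bullet> b \<le> u \<bullet> b"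
  have le': "l $ j \<le> u $ j" for j using le[of "axis j 1"] by (auto simp: inner_axis Basis_vec_def)
  have meas: "(\<lambda>f. \<chi> j. f j) \<in> measurable (PiM UNIV (\<lambda>_. lborel)) (borel :: (real^'m) measure)"
    by measurable
  have pre: "(\<lambda>f. \<chi> j. f j) -` box l u \<inter> space (PiM UNIV (\<lambda>_. lborel)) = PiE UNIV (\<lambda>j. {l$j<..<u$j})"
    by (auto simp: mem_box_cart space_PiM PiE_def Pi_def)
  have "emeasure (distr (PiM UNIV (\<lambda>_. lborel)) borel (\<lambda>f. \<chi> j. f j)) (box l u)
      = emeasure (PiM UNIV (\<lambda>_. lborel)) (PiE UNIV (\<lambda>j. {l$j<..<u$j}))"
    using meas by (subst emeasure_distr) (auto simp: pre)
  also have "\<dots> = (\<Prod>j\<in>UNIV. emeasure lborel {l$j<..<u$j})"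
    by (rule emeasure_PiM) auto
  also have "\<dots> = (\<Prod>j\<in>UNIV. ennreal (u$j - l$j))"
    using le' by simp
  also have "\<dots> = ennreal (\<Prod>j\<in>UNIV. (u$j - l$j))"
    using le' by (simp add: prod_ennreal)
  also have "(\<Prod>j\<in>UNIV. (u$j - l$j)) = (\<Prod>b\<in>Basis. (u - l) \<bullet> b)"
  proof -
    have "(\<Prod>b\<in>Basis. (u - l) \<bullet> b) = (\<Prod>b\<in>(\<lambda>j. axis j (1::real)) ` UNIV. (u - l) \<bullet> b)"
      by (rule arg_cong[where f="prod _"]) (auto simp: Basis_vec_def)
    also have "\<dots> = (\<Prod>j\<in>UNIV. (u - l) \<bullet> axis j 1)"
      by (subst prod.reindex) (auto simp: inj_on_def axis_eq_axis)
    finally show ?thesis by (simp add: inner_axis)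
  qed
  finally show "emeasure (distr (PiM UNIV (\<lambda>_. lborel)) borel (\<lambda>f. \<chi> j. f j)) (box l u) = (\<Prod>b\<in>Basis. (u - l) \<bullet> b)"
    using le by (simp add: prod_nonneg)
qed simp

lemma PiM_density_lborel:
  fixes f :: "'i \<Rightarrow> real \<Rightarrow> real"
  assumes I: "finite I"
    and meas[measurable]: "\<And>i. f i \<in> borel_measurable borel"
    and nn: "\<And>i x. 0 \<le> f i x"
    and ps: "\<And>i. prob_space (density lborel (f i))"
  shows "density (PiM I (\<lambda>_. lborel)) (\<lambda>x. ennreal (\<Prod>i\<in>I. f i (x i))) = PiM I (\<lambda>i. density lborel (f i))"
proof -
  interpret L: product_sigma_finite "\<lambda>_::'i. lborel :: real measure" by standard
  interpret D: product_prob_space "\<lambda>i. density lborel (f i)"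
    by (intro product_prob_spaceI ps)
  show ?thesis
  proof (rule D.PiM_eqI[OF I])
    show "sets (density (PiM I (\<lambda>_. lborel)) (\<lambda>x. ennreal (\<Prod>i\<in>I. f i (x i)))) = sets (PiM I (\<lambda>i. density lborel (f i)))"
      unfolding sets_density by (intro sets_PiM_cong) auto
  next
    fix A assume A: "\<And>i. i \<in> I \<Longrightarrow> A i \<in> sets (density lborel (f i))"
    then have A': "\<And>i. i \<in> I \<Longrightarrow> A i \<in> sets borel" by simp
    have PA: "PiE I A \<in> sets (PiM I (\<lambda>_. lborel))"
      using A' I by (intro sets_PiM_I_finite) auto
    have "emeasure (density (PiM I (\<lambda>_. lborel)) (\<lambda>x. ennreal (\<Prod>i\<in>I. f i (x i)))) (PiE I A)
        = (\<integral>\<^sup>+x. ennreal (\<Prod>i\<in>I. f i (x i)) * indicator (PiE I A) x \<partial>PiM I (\<lambda>_. lborel))"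
      apply (rule emeasure_density)
       apply measurable
      using I A' by auto
    also have "\<dots> = (\<integral>\<^sup>+x. (\<Prod>i\<in>I. ennreal (f i (x i)) * indicator (A i) (x i)) \<partial>PiM I (\<lambda>_. lborel))"
    proof (rule nn_integral_cong)
      fix x assume x: "x \<in> space (PiM I (\<lambda>_. lborel :: real measure))"
      have ind: "indicator (PiE I A) x = (\<Prod>i\<in>I. indicator (A i) (x i) :: ennreal)"
      proof (cases "\<forall>i\<in>I. x i \<in> A i")
        case True
        then have "x \<in> PiE I A" using x by (auto simp: space_PiM PiE_iff)
        then show ?thesis using True by simp
      next
        case False
        then obtain i where i: "i \<in> I" "x i \<notin> A i" by blast
        then have "x \<notin> PiE I A" by (auto simp: PiE_iff)
        moreover have "(\<Prod>i\<in>I. indicator (A i) (x i) :: ennreal) = 0"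
          using i I by (intro prod_zero) (auto intro!: bexI[of _ i])
        ultimately show ?thesis by simp
      qed
      show "ennreal (\<Prod>i\<in>I. f i (x i)) * indicator (PiE I A) x = (\<Prod>i\<in>I. ennreal (f i (x i)) * indicator (A i) (x i))"
        unfolding ind using nn by (simp add: prod_ennreal[symmetric] prod.distrib)
    qed
    also have "\<dots> = (\<Prod>i\<in>I. \<integral>\<^sup>+x. ennreal (f i x) * indicator (A i) x \<partial>lborel)"
      using A' by (intro L.product_nn_integral_prod I) auto
    also have "\<dots> = (\<Prod>i\<in>I. emeasure (density lborel (f i)) (A i))"
      using A' by (intro prod.cong refl) (simp add: emeasure_density)
    finally show "emeasure (density (PiM I (\<lambda>_. lborel)) (\<lambda>x. ennreal (\<Prod>i\<in>I. f i (x i)))) (PiE I A)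
        = (\<Prod>i\<in>I. emeasure (density lborel (f i)) (A i))" .
  qed
qed

lemma gaussian_vec_distr:
  assumes s: "0 < s"
  shows "gaussian_vec \<mu> s = distr (PiM UNIV (\<lambda>j. density lborel (normal_density (\<mu> $ j) s))) borel (\<lambda>f. \<chi> j. f j)"
proof -
  have "gaussian_vec \<mu> s = density (distr (PiM UNIV (\<lambda>_. lborel)) borel (\<lambda>f. \<chi> j. f j))
       (\<lambda>x::real^'a. ennreal (\<Prod>j\<in>UNIV. normal_density (\<mu> $ j) s (x $ j)))"
    unfolding gaussian_vec_def by (subst lborel_vec) rule
  also have "\<dots> = distr (density (PiM UNIV (\<lambda>_. lborel)) (\<lambda>f. ennreal (\<Prod>j\<in>UNIV. normal_density (\<mu> $ j) s ((\<chi> j. f j) $ j)))) borel (\<lambda>f. \<chi> j. f j)"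
    by (rule density_distr) measurable
  also have "(\<lambda>f. ennreal (\<Prod>j\<in>UNIV. normal_density (\<mu> $ j) s ((\<chi> j. f j) $ j))) = (\<lambda>f. ennreal (\<Prod>j\<in>UNIV. normal_density (\<mu> $ j) s (f j)))"
    by simp
  also have "density (PiM UNIV (\<lambda>_. lborel)) (\<lambda>f. ennreal (\<Prod>j\<in>UNIV. normal_density (\<mu> $ j) s (f j)))
      = PiM UNIV (\<lambda>j. density lborel (normal_density (\<mu> $ j) s))"
    by (rule PiM_density_lborel) (auto intro: prob_space_normal_density s)
  finally show ?thesis .
qed

lemma quant_floor: "quant \<Delta> x = real_of_int \<lfloor>x / \<Delta>\<rfloor> * \<Delta> + \<Delta> / 2"
proof (cases "\<Delta> = 0")
  case True then show ?thesis by (simp add: quant_def)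
next
  case False
  then have "(x - \<Delta> / 2) / \<Delta> + 1/2 = x / \<Delta>" by (simp add: field_simps)
  then show ?thesis by (simp add: quant_def round_def)
qed

lemma measurable_quant[measurable]:
  assumes [measurable]: "f \<in> borel_measurable M" "g \<in> borel_measurable M"
  shows "(\<lambda>x. quant (f x) (g x)) \<in> borel_measurable M"
  unfolding quant_floor by measurable

lemma dither:
  fixes f :: "real \<Rightarrow> ennreal"
  assumes D: "0 < \<Delta>" and f[measurable]: "f \<in> borel_measurable borel"
  shows "(\<integral>\<^sup>+u. indicator {-\<Delta>/2<..<\<Delta>/2} u * f (quant \<Delta> (g + u) - u) \<partial>lborel)
       = (\<integral>\<^sup>+w. indicator {g-\<Delta>/2<..<g+\<Delta>/2} w * f w \<partial>lborel)"
proof -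
  define n where "n = \<lfloor>(g + \<Delta>/2) / \<Delta>\<rfloor>"
  define p where "p = real_of_int n * \<Delta>"
  define q where "q = p - g"
  have n1: "real_of_int n \<le> (g + \<Delta>/2) / \<Delta>" and n2: "(g + \<Delta>/2) / \<Delta> < real_of_int n + 1"
    unfolding n_def by linarith+
  have p1: "p \<le> g + \<Delta>/2" using n1 D unfolding p_def by (simp add: field_simps)
  have p2: "g + \<Delta>/2 < p + \<Delta>" using n2 D unfolding p_def by (simp add: field_simps)
  have lo: "quant \<Delta> (g + u) - u = p - \<Delta>/2 - u" if "-\<Delta>/2 < u" "u < q" for u
  proof -
    have "\<lfloor>(g + u) / \<Delta>\<rfloor> = n - 1"
    proof (rule floor_unique)
      show "real_of_int (n - 1) \<le> (g + u) / \<Delta>"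
        using that p1 D by (simp add: p_def q_def field_simps)
      show "(g + u) / \<Delta> < real_of_int (n - 1) + 1"
        using that D by (simp add: p_def q_def field_simps)
    qed
    then have e: "real_of_int \<lfloor>(g + u) / \<Delta>\<rfloor> = real_of_int n - 1" by simp
    show ?thesis unfolding quant_floor e p_def by (simp add: algebra_simps)
  qed
  have hi: "quant \<Delta> (g + u) - u = p + \<Delta>/2 - u" if "q < u" "u < \<Delta>/2" for u
  proof -
    have "\<lfloor>(g + u) / \<Delta>\<rfloor> = n"
    proof (rule floor_unique)
      show "real_of_int n \<le> (g + u) / \<Delta>"
        using that D by (simp add: p_def q_def field_simps)
      show "(g + u) / \<Delta> < real_of_int n + 1"
        using that p2 D by (simp add: p_def q_def field_simps)
    qed
    then show ?thesis by (simp add: quant_floor p_def algebra_simps)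
  qed
  have "(\<integral>\<^sup>+u. indicator {-\<Delta>/2<..<\<Delta>/2} u * f (quant \<Delta> (g + u) - u) \<partial>lborel)
      = (\<integral>\<^sup>+u. indicator {-\<Delta>/2<..<q} u * f (p - \<Delta>/2 - u) + indicator {q<..<\<Delta>/2} u * f (p + \<Delta>/2 - u) \<partial>lborel)"
  proof (rule nn_integral_cong_AE)
    show "AE u in lborel. indicator {-\<Delta>/2<..<\<Delta>/2} u * f (quant \<Delta> (g + u) - u)
       = indicator {-\<Delta>/2<..<q} u * f (p - \<Delta>/2 - u) + indicator {q<..<\<Delta>/2} u * f (p + \<Delta>/2 - u)"
      using AE_lborel_singleton[of q]
    proof eventually_elim
      case (elim u)
      show ?case
      proof (cases "u < q")
        case True then show ?thesis using lo[of u] p1 by (auto simp: indicator_def q_def)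
      next
        case False
        then have "q < u" using elim by simp
        then show ?thesis using hi[of u] p1 p2 by (auto simp: indicator_def q_def)
      qed
    qed
  qed
  also have "\<dots> = (\<integral>\<^sup>+u. indicator {-\<Delta>/2<..<q} u * f (p - \<Delta>/2 - u) \<partial>lborel)
      + (\<integral>\<^sup>+u. indicator {q<..<\<Delta>/2} u * f (p + \<Delta>/2 - u) \<partial>lborel)"
    by (rule nn_integral_add) measurable
  also have "(\<integral>\<^sup>+u. indicator {-\<Delta>/2<..<q} u * f (p - \<Delta>/2 - u) \<partial>lborel)
      = (\<integral>\<^sup>+w. indicator {g-\<Delta>/2<..<p} w * f w \<partial>lborel)"
  proof -
    have "(\<integral>\<^sup>+w. indicator {g-\<Delta>/2<..<p} w * f w \<partial>lborel)
        = ennreal \<bar>-1\<bar> * (\<integral>\<^sup>+u. indicator {g-\<Delta>/2<..<p} (p - \<Delta>/2 + (-1) * u) * f (p - \<Delta>/2 + (-1) * u) \<partial>lborel)"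
      by (rule nn_integral_real_affine) auto
    also have "\<dots> = (\<integral>\<^sup>+u. indicator {-\<Delta>/2<..<q} u * f (p - \<Delta>/2 - u) \<partial>lborel)"
    proof -
      have "\<And>u. indicator {g-\<Delta>/2<..<p} (p - \<Delta>/2 + (-1) * u) * f (p - \<Delta>/2 + (-1) * u) = indicator {-\<Delta>/2<..<q} u * f (p - \<Delta>/2 - u)"
        by (auto simp: indicator_def q_def)
      then show ?thesis by simp
    qed
    finally show ?thesis by simp
  qed
  also have "(\<integral>\<^sup>+u. indicator {q<..<\<Delta>/2} u * f (p + \<Delta>/2 - u) \<partial>lborel)
      = (\<integral>\<^sup>+w. indicator {p<..<g+\<Delta>/2} w * f w \<partial>lborel)"
  proof -
    have "(\<integral>\<^sup>+w. indicator {p<..<g+\<Delta>/2} w * f w \<partial>lborel)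
        = ennreal \<bar>-1\<bar> * (\<integral>\<^sup>+u. indicator {p<..<g+\<Delta>/2} (p + \<Delta>/2 + (-1) * u) * f (p + \<Delta>/2 + (-1) * u) \<partial>lborel)"
      by (rule nn_integral_real_affine) auto
    also have "\<dots> = (\<integral>\<^sup>+u. indicator {q<..<\<Delta>/2} u * f (p + \<Delta>/2 - u) \<partial>lborel)"
    proof -
      have "\<And>u. indicator {p<..<g+\<Delta>/2} (p + \<Delta>/2 + (-1) * u) * f (p + \<Delta>/2 + (-1) * u) = indicator {q<..<\<Delta>/2} u * f (p + \<Delta>/2 - u)"
        by (auto simp: indicator_def q_def)
      then show ?thesis by simp
    qed
    finally show ?thesis by simp
  qed
  also have "(\<integral>\<^sup>+w. indicator {g-\<Delta>/2<..<p} w * f w \<partial>lborel) + (\<integral>\<^sup>+w. indicator {p<..<g+\<Delta>/2} w * f w \<partial>lborel)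
      = (\<integral>\<^sup>+w. indicator {g-\<Delta>/2<..<p} w * f w + indicator {p<..<g+\<Delta>/2} w * f w \<partial>lborel)"
    by (rule nn_integral_add[symmetric]) measurable
  also have "\<dots> = (\<integral>\<^sup>+w. indicator {g-\<Delta>/2<..<g+\<Delta>/2} w * f w \<partial>lborel)"
  proof (rule nn_integral_cong_AE)
    show "AE w in lborel. indicator {g-\<Delta>/2<..<p} w * f w + indicator {p<..<g+\<Delta>/2} w * f w
        = indicator {g-\<Delta>/2<..<g+\<Delta>/2} w * f w"
      using AE_lborel_singleton[of p]
      by eventually_elim (use p1 p2 D in \<open>auto simp: indicator_def q_def\<close>)
  qed
  finally show ?thesis .
qed

lemma Gamma_three_halves: "Gamma (3/2 :: real) = sqrt pi / 2"
proof -
  have ni: "(1/2::real) \<notin> \<int>\<^sub>\<le>\<^sub>0"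
  proof
    assume "(1/2::real) \<in> \<int>\<^sub>\<le>\<^sub>0"
    then obtain n :: int where "n \<le> 0" "(1/2::real) = of_int n" by (auto elim!: nonpos_Ints_cases)
    then show False by linarith
  qed
  have "Gamma (3/2 :: real) = Gamma (1/2 + 1)" by simp
  also have "\<dots> = 1/2 * Gamma (1/2)" by (rule Gamma_plus1[OF ni])
  finally show ?thesis by (simp add: Gamma_one_half_real)
qed

definition mixw :: "real \<Rightarrow> real \<Rightarrow> real \<Rightarrow> real" where
  "mixw \<sigma> w v = gamma_density (3/2) (1/2) v *
      (if 0 < v \<and> - step \<sigma> v / 2 < w \<and> w < step \<sigma> v / 2 then 1 / step \<sigma> v else 0)"

lemma measurable_mixw[measurable]:
  assumes [measurable]: "f \<in> borel_measurable M" "g \<in> borel_measurable M"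
  shows "(\<lambda>x. mixw \<sigma> (f x) (g x)) \<in> borel_measurable M"
  unfolding mixw_def gamma_density_def step_def by measurable

lemma mixture:
  assumes s: "0 < \<sigma>"
  shows "(\<integral>\<^sup>+v. ennreal (mixw \<sigma> w v) \<partial>lborel) = ennreal (normal_density 0 \<sigma> w)"
proof -
  define a where "a = w\<^sup>2 / \<sigma>\<^sup>2"
  define K where "K = (1/2) powr (3/2) / (Gamma (3/2) * (2 * \<sigma>))"
  have a0: "0 \<le> a" unfolding a_def by simp
  have K0: "0 < K" unfolding K_def using s by (simp add: Gamma_three_halves)
  have pt: "mixw \<sigma> w v = K * exp (- v / 2) * indicator {a<..} v" for v
  proof (cases "0 < v")
    case False
    then show ?thesis using a0 by (simp add: mixw_def gamma_density_def indicator_def)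
  next
    case True
    have st: "step \<sigma> v = 2 * \<sigma> * sqrt v" by (simp add: step_def)
    have cond: "(- step \<sigma> v / 2 < w \<and> w < step \<sigma> v / 2) \<longleftrightarrow> a < v"
    proof -
      have "(- step \<sigma> v / 2 < w \<and> w < step \<sigma> v / 2) \<longleftrightarrow> \<bar>w\<bar> < \<sigma> * sqrt v"
        by (simp add: st abs_less_iff) (auto simp: algebra_simps)
      also have "\<dots> \<longleftrightarrow> w\<^sup>2 < (\<sigma> * sqrt v)\<^sup>2"
        using s True by (smt (verit, del_insts) mult_sign_intros(5) real_sqrt_abs real_sqrt_gt_zero sqrt_ge_absD)
      also have "\<dots> \<longleftrightarrow> a < v"
        using s True by (simp add: a_def power_mult_distrib field_simps)
      finally show ?thesis .
    qed
    have "gamma_density (3/2) (1/2) v * (1 / step \<sigma> v) = K * exp (- v / 2)"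
    proof -
      have "v powr (3/2 - 1) = sqrt v" using True by (simp add: powr_half_sqrt)
      then show ?thesis using True s
        by (simp add: gamma_density_def st K_def field_simps)
    qed
    then show ?thesis using True cond by (simp add: mixw_def indicator_def)
  qed
  have "(\<integral>\<^sup>+v. ennreal (mixw \<sigma> w v) \<partial>lborel) = (\<integral>\<^sup>+v. ennreal (K * exp (- v / 2)) * indicator {a..} v \<partial>lborel)"
  proof (rule nn_integral_cong_AE)
    show "AE v in lborel. ennreal (mixw \<sigma> w v) = ennreal (K * exp (- v / 2)) * indicator {a..} v"
      using AE_lborel_singleton[of a]
      by eventually_elim (auto simp: pt indicator_def)
  qed
  also have "\<dots> = ennreal (0 - (- 2 * K * exp (- a / 2)))"
  proof (rule nn_integral_FTC_atLeast)
    show "(\<lambda>x. K * exp (- x / 2)) \<in> borel_measurable borel" by measurable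
    show "DERIV (\<lambda>x. - 2 * K * exp (- x / 2)) x :> K * exp (- x / 2)" for x
      by (auto intro!: derivative_eq_intros)
    show "0 \<le> K * exp (- x / 2)" for x using K0 by simp
    show "((\<lambda>x. - 2 * K * exp (- x / 2)) \<longlongrightarrow> 0) at_top"
      by real_asymp
  qed
  also have "\<dots> = ennreal (2 * K * exp (- a / 2))"
    by simp
  also have "2 * K * exp (- a / 2) = normal_density 0 \<sigma> w"
  proof -
    have p: "(1/2::real) powr (3/2) = 1/2 * (1 / sqrt 2)"
    proof -
      have "(1/2::real) powr (3/2) = (1/2) powr (1 + 1/2)" by simp
      also have "\<dots> = (1/2) powr 1 * (1/2) powr (1/2)" by (rule powr_add)
      also have "\<dots> = 1/2 * (1 / sqrt 2)" by (simp add: powr_half_sqrt real_sqrt_divide)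
      finally show ?thesis .
    qed
    have q: "sqrt (2 * pi * \<sigma>\<^sup>2) = sqrt 2 * sqrt pi * \<sigma>"
      using s by (simp add: real_sqrt_mult)
    have e: "- a / 2 = - ((w - 0)\<^sup>2 / (2 * \<sigma>\<^sup>2))" by (simp add: a_def)
    show ?thesis
      unfolding normal_density_def K_def p Gamma_three_halves q e using s by (simp add: field_simps)
  qed
  finally show ?thesis .
qed

lemma pair_law_mixw: "pair_law \<sigma> = density lborel (\<lambda>(v, u). ennreal (mixw \<sigma> u v))"
  unfolding pair_law_def mixw_def by simp

lemma inner_dither:
  assumes s: "0 < \<sigma>" and A[measurable]: "A \<in> sets borel"
  shows "(\<integral>\<^sup>+u. ennreal (mixw \<sigma> u v) * indicator A (quant (step \<sigma> v) (g + u) - u) \<partial>lborel)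
       = (\<integral>\<^sup>+w. ennreal (mixw \<sigma> (w - g) v) * indicator A w \<partial>lborel)"
proof (cases "0 < v")
  case False
  then show ?thesis by (simp add: mixw_def)
next
  case True
  define \<Delta> where "\<Delta> = step \<sigma> v"
  have D: "0 < \<Delta>" using s True by (simp add: \<Delta>_def step_def)
  define c where "c = gamma_density (3/2) (1/2) v * (1 / \<Delta>)"
  have m1: "ennreal (mixw \<sigma> u v) = ennreal c * indicator {-\<Delta>/2<..<\<Delta>/2} u" for u
    using True by (simp add: mixw_def c_def \<Delta>_def indicator_def)
  have m2: "ennreal (mixw \<sigma> (w - g) v) = ennreal c * indicator {g-\<Delta>/2<..<g+\<Delta>/2} w" for w
    using True by (auto simp: mixw_def c_def \<Delta>_def indicator_def)
  have "(\<integral>\<^sup>+u. ennreal (mixw \<sigma> u v) * indicator A (quant (step \<sigma> v) (g + u) - u) \<partial>lborel)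
      = ennreal c * (\<integral>\<^sup>+u. indicator {-\<Delta>/2<..<\<Delta>/2} u * indicator A (quant \<Delta> (g + u) - u) \<partial>lborel)"
    unfolding m1 \<Delta>_def[symmetric] by (subst nn_integral_cmult[symmetric]) (measurable, simp add: mult.assoc)
  also have "\<dots> = ennreal c * (\<integral>\<^sup>+w. indicator {g-\<Delta>/2<..<g+\<Delta>/2} w * indicator A w \<partial>lborel)"
    by (subst dither[OF D]) auto
  also have "\<dots> = (\<integral>\<^sup>+w. ennreal (mixw \<sigma> (w - g) v) * indicator A w \<partial>lborel)"
    unfolding m2 by (subst nn_integral_cmult[symmetric]) (measurable, simp add: mult.assoc)
  finally show ?thesis .
qed

lemma core_1d:
  assumes s: "0 < \<sigma>"
  shows "distr (pair_law \<sigma>) borel (\<lambda>(v, u). quant (step \<sigma> v) (g + u) - u) = density lborel (normal_density g \<sigma>)"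
proof (rule measure_eqI)
  show "sets (distr (pair_law \<sigma>) borel (\<lambda>(v, u). quant (step \<sigma> v) (g + u) - u)) = sets (density lborel (normal_density g \<sigma>))"
    by simp
next
  fix A assume "A \<in> sets (distr (pair_law \<sigma>) borel (\<lambda>(v, u). quant (step \<sigma> v) (g + u) - u))"
  then have A[measurable]: "A \<in> sets borel" by simp
  have hm0: "(\<lambda>(v, u). quant (step \<sigma> v) (g + u) - u) \<in> borel_measurable (borel \<Otimes>\<^sub>M borel :: (real \<times> real) measure)"
    unfolding step_def by measurable
  have hm[measurable]: "(\<lambda>(v, u). quant (step \<sigma> v) (g + u) - u) \<in> borel_measurable (borel :: (real \<times> real) measure)"
    using hm0 by (simp add: borel_prod)
  have dm0: "(\<lambda>(v, u). ennreal (mixw \<sigma> u v)) \<in> borel_measurable (borel \<Otimes>\<^sub>M borel :: (real \<times> real) measure)"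
    by measurable
  have dm[measurable]: "(\<lambda>(v, u). ennreal (mixw \<sigma> u v)) \<in> borel_measurable (borel :: (real \<times> real) measure)"
    using dm0 by (simp add: borel_prod)
  have pre[measurable]: "(\<lambda>(v, u). quant (step \<sigma> v) (g + u) - u) -` A \<in> sets borel"
    using measurable_sets[OF hm A] by simp
  have "emeasure (distr (pair_law \<sigma>) borel (\<lambda>(v, u). quant (step \<sigma> v) (g + u) - u)) A
      = emeasure (pair_law \<sigma>) ((\<lambda>(v, u). quant (step \<sigma> v) (g + u) - u) -` A \<inter> space (pair_law \<sigma>))"
    by (rule emeasure_distr) (simp_all add: pair_law_mixw)
  also have "\<dots> = (\<integral>\<^sup>+x. ennreal (mixw \<sigma> (snd x) (fst x)) * indicator A (quant (step \<sigma> (fst x)) (g + snd x) - snd x) \<partial>lborel)"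
    unfolding pair_law_mixw
    by (subst emeasure_density) (auto intro!: nn_integral_cong simp: indicator_def split: prod.splits)
  also have "\<dots> = (\<integral>\<^sup>+x. ennreal (mixw \<sigma> (snd x) (fst x)) * indicator A (quant (step \<sigma> (fst x)) (g + snd x) - snd x) \<partial>(lborel \<Otimes>\<^sub>M lborel))"
    by (simp only: lborel_prod)
  also have "\<dots> = (\<integral>\<^sup>+v. \<integral>\<^sup>+u. ennreal (mixw \<sigma> u v) * indicator A (quant (step \<sigma> v) (g + u) - u) \<partial>lborel \<partial>lborel)"
  proof -
    have m: "(\<lambda>x. ennreal (mixw \<sigma> (snd x) (fst x)) * indicator A (quant (step \<sigma> (fst x)) (g + snd x) - snd x)) \<in> borel_measurable (lborel \<Otimes>\<^sub>M lborel)"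
      unfolding step_def by measurable
    show ?thesis using lborel.nn_integral_fst[OF m] by simp
  qed
  also have "\<dots> = (\<integral>\<^sup>+v. \<integral>\<^sup>+w. ennreal (mixw \<sigma> (w - g) v) * indicator A w \<partial>lborel \<partial>lborel)"
    by (intro nn_integral_cong inner_dither s A)
  also have "\<dots> = (\<integral>\<^sup>+w. \<integral>\<^sup>+v. ennreal (mixw \<sigma> (w - g) v) * indicator A w \<partial>lborel \<partial>lborel)"
    by (rule lborel_pair.Fubini'[symmetric]) measurable
  also have "\<dots> = (\<integral>\<^sup>+w. ennreal (normal_density g \<sigma> w) * indicator A w \<partial>lborel)"
  proof (rule nn_integral_cong)
    fix w
    have "(\<integral>\<^sup>+v. ennreal (mixw \<sigma> (w - g) v) * indicator A w \<partial>lborel) = (\<integral>\<^sup>+v. ennreal (mixw \<sigma> (w - g) v) \<partial>lborel) * indicator A w"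
      by (rule nn_integral_multc) measurable
    also have "\<dots> = ennreal (normal_density g \<sigma> w) * indicator A w"
      unfolding mixture[OF s] by (simp add: normal_density_def)
    finally show "(\<integral>\<^sup>+v. ennreal (mixw \<sigma> (w - g) v) * indicator A w \<partial>lborel) = ennreal (normal_density g \<sigma> w) * indicator A w" .
  qed
  also have "\<dots> = emeasure (density lborel (normal_density g \<sigma>)) A"
    by (subst emeasure_density) auto
  finally show "emeasure (distr (pair_law \<sigma>) borel (\<lambda>(v, u). quant (step \<sigma> v) (g + u) - u)) A = emeasure (density lborel (normal_density g \<sigma>)) A" .
qed

definition hq :: "real \<Rightarrow> real \<Rightarrow> real \<times> real \<Rightarrow> real" where
  "hq \<sigma> g = (\<lambda>(v, u). quant (step \<sigma> v) (g + u) - u)"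

lemma hq_borel[measurable]: "hq \<sigma> g \<in> borel_measurable (borel :: (real \<times> real) measure)"
proof -
  have hm0: "(\<lambda>(v, u). quant (step \<sigma> v) (g + u) - u) \<in> borel_measurable (borel \<Otimes>\<^sub>M borel :: (real \<times> real) measure)"
    unfolding step_def by measurable
  then show ?thesis
    by (simp add: borel_prod hq_def)
qed

lemma sets_pair_law[simp, measurable_cong]: "sets (pair_law \<sigma>) = sets borel"
  by (simp add: pair_law_def)

lemma measurable_hq[measurable]: "hq \<sigma> g \<in> borel_measurable (pair_law \<sigma>)"
proof -
  have "measurable (pair_law \<sigma>) (borel :: real measure) = measurable borel borel"
    by (rule measurable_cong_sets) simp_all
  then show ?thesis using hq_borel by simp
qed

lemma distr_hq: "0 < \<sigma> \<Longrightarrow> distr (pair_law \<sigma>) borel (hq \<sigma> g) = density lborel (normal_density g \<sigma>)"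
  unfolding hq_def by (rule core_1d)

lemma prob_space_pair_law: assumes s: "0 < \<sigma>" shows "prob_space (pair_law \<sigma>)"
proof
  have "emeasure (pair_law \<sigma>) (space (pair_law \<sigma>)) = emeasure (distr (pair_law \<sigma>) borel (hq \<sigma> 0)) UNIV"
    by (subst emeasure_distr) (auto simp: pair_law_def)
  also have "\<dots> = 1"
    unfolding distr_hq[OF s]
    using prob_space.emeasure_space_1[OF prob_space_normal_density[OF s, of 0]] by simp
  finally show "emeasure (pair_law \<sigma>) (space (pair_law \<sigma>)) = 1" .
qed

lemma prob_space_shared_rand: "0 < \<sigma> \<Longrightarrow> prob_space (shared_rand N \<sigma>)"
  unfolding shared_rand_def by (intro prob_space_PiM prob_space_pair_law)

lemma indep_coords:
  assumes s: "0 < \<sigma>" and N: "N \<ge> 1"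
  shows "prob_space.indep_vars (shared_rand N \<sigma> :: ((nat \<times> 'm::finite) \<Rightarrow> real \<times> real) measure)
           (\<lambda>_. pair_law \<sigma>) (\<lambda>k \<omega>. \<omega> k) ({..<N} \<times> UNIV)"
proof -
  let ?K = "{..<N} \<times> (UNIV :: 'm set)"
  let ?SR = "shared_rand N \<sigma> :: ((nat \<times> 'm::finite) \<Rightarrow> real \<times> real) measure"
  interpret SR: prob_space ?SR by (rule prob_space_shared_rand[OF s])
  have "(0, undefined) \<in> ?K" using N by auto
  then have ne: "?K \<noteq> {}" by blast
  have "distr ?SR (PiM ?K (\<lambda>_. pair_law \<sigma>)) (\<lambda>\<omega>. \<lambda>k\<in>?K. \<omega> k) = distr ?SR ?SR (\<lambda>\<omega>. \<omega>)"
    by (rule distr_cong) (auto simp: shared_rand_def space_PiM PiE_def extensional_def restrict_def fun_eq_iff)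
  also have "\<dots> = ?SR" by simp
  also have "\<dots> = PiM ?K (\<lambda>k. distr ?SR (pair_law \<sigma>) (\<lambda>\<omega>. \<omega> k))"
    unfolding shared_rand_def
    by (intro PiM_cong refl distr_PiM_component[symmetric] prob_space_pair_law[OF s]) auto
  finally show ?thesis
    by (subst SR.indep_vars_iff_distr_eq_PiM'[OF ne]) (auto simp: shared_rand_def)
qed

lemma part1:
  fixes gbar :: "nat \<Rightarrow> real ^ 'm::finite"
  assumes s: "0 < \<sigma>" and N: "N \<ge> 1"
  shows "distr (shared_rand N \<sigma>) borel (aggregate N \<sigma> gbar)
       = gaussian_vec ((1 / real N) *\<^sub>R (\<Sum>i<N. gbar i)) (\<sigma> / sqrt (real N))"
proof -
  let ?K = "{..<N} \<times> (UNIV :: 'm set)"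
  let ?SR = "shared_rand N \<sigma> :: ((nat \<times> 'm) \<Rightarrow> real \<times> real) measure"
  interpret SR: prob_space ?SR by (rule prob_space_shared_rand[OF s])
  define g where "g k = gbar (fst k) $ snd k" for k :: "nat \<times> 'm"
  define X where "X k \<omega> = hq \<sigma> (g k) (\<omega> k)" for k and \<omega> :: "(nat \<times> 'm) \<Rightarrow> real \<times> real"
  define Z where "Z j \<omega> = (1 / real N) * (\<Sum>k\<in>{..<N} \<times> {j}. X k \<omega>)" for j and \<omega> :: "(nat \<times> 'm) \<Rightarrow> real \<times> real"
  define m where "m j = (1 / real N) * (\<Sum>i<N. gbar i $ j)" for j
  have Npos: "0 < real N" using N by simp
  have compK[measurable]: "(\<lambda>\<omega>. \<omega> k) \<in> measurable ?SR (pair_law \<sigma>)" if "k \<in> ?K" for k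
    using that unfolding shared_rand_def by (rule measurable_component_singleton)
  have Xm[measurable]: "X k \<in> borel_measurable ?SR" if "k \<in> ?K" for k
    unfolding X_def using measurable_comp[OF compK[OF that] measurable_hq, of "g k"] by (simp add: comp_def)
  have indepX: "SR.indep_vars (\<lambda>_. borel) X ?K"
    unfolding X_def
    by (rule SR.indep_vars_compose2[OF indep_coords[OF s N]]) simp
  have distX: "distributed ?SR lborel (X k) (normal_density (g k) \<sigma>)" if k: "k \<in> ?K" for k
  proof -
    have "distr ?SR lborel (X k) = distr ?SR borel (X k)"
      by (rule distr_cong) simp_all
    also have "\<dots> = distr (distr ?SR (pair_law \<sigma>) (\<lambda>\<omega>. \<omega> k)) borel (hq \<sigma> (g k))"
      by (subst distr_distr) (use k in \<open>simp_all add: X_def[abs_def] comp_def\<close>)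
    also have "distr ?SR (pair_law \<sigma>) (\<lambda>\<omega>. \<omega> k) = pair_law \<sigma>"
      unfolding shared_rand_def using k by (intro distr_PiM_component prob_space_pair_law[OF s])
    also have "distr (pair_law \<sigma>) borel (hq \<sigma> (g k)) = density lborel (normal_density (g k) \<sigma>)"
      by (rule distr_hq[OF s])
    finally show ?thesis
      unfolding distributed_def using Xm[OF k] by simp
  qed
  have distZ: "distributed ?SR lborel (Z j) (normal_density (m j) (\<sigma> / sqrt (real N)))" for j
  proof -
    let ?I = "{..<N} \<times> {j}"
    have "(0, j) \<in> ?I" using N by auto
    then have neI: "?I \<noteq> {}" by blast
    have S: "distributed ?SR lborel (\<lambda>\<omega>. \<Sum>k\<in>?I. X k \<omega>) (normal_density (\<Sum>k\<in>?I. g k) (sqrt (\<Sum>k\<in>?I. \<sigma>\<^sup>2)))"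
      by (rule SR.sum_indep_normal) (use neI s in \<open>auto intro: SR.indep_vars_subset[OF indepX] distX\<close>)
    have "distributed ?SR lborel (\<lambda>\<omega>. 0 + (1 / real N) * (\<Sum>k\<in>?I. X k \<omega>))
        (normal_density (0 + (1 / real N) * (\<Sum>k\<in>?I. g k)) (\<bar>1 / real N\<bar> * sqrt (\<Sum>k\<in>?I. \<sigma>\<^sup>2)))"
      by (rule SR.normal_density_affine[OF S]) (use s Npos in auto)
    moreover have "(\<Sum>k\<in>?I. g k) = (\<Sum>i<N. gbar i $ j)"
    proof -
      have e: "{..<N} \<times> {j} = (\<lambda>i. (i, j)) ` {..<N}" by auto
      show ?thesis unfolding g_def e by (subst sum.reindex) (auto simp: inj_on_def)
    qed
    moreover have "\<bar>1 / real N\<bar> * sqrt (\<Sum>k\<in>?I. \<sigma>\<^sup>2) = \<sigma> / sqrt (real N)"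
    proof -
      have "(\<Sum>k\<in>?I. \<sigma>\<^sup>2) = real N * \<sigma>\<^sup>2" by (simp add: card_cartesian_product)
      then have "sqrt (\<Sum>k\<in>?I. \<sigma>\<^sup>2) = sqrt (real N) * \<sigma>" using s by (simp add: real_sqrt_mult)
      moreover have "\<bar>1 / real N\<bar> * (sqrt (real N) * \<sigma>) = \<sigma> / sqrt (real N)"
      proof -
        have "real N = sqrt (real N) * sqrt (real N)" by simp
        then have "\<bar>1 / real N\<bar> * (sqrt (real N) * \<sigma>) = 1 / (sqrt (real N) * sqrt (real N)) * (sqrt (real N) * \<sigma>)"
          using Npos by (metis abs_of_pos zero_less_divide_1_iff)
        also have "\<dots> = \<sigma> / sqrt (real N)" using Npos by (simp add: field_simps)
        finally show ?thesis .
      qed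
      ultimately show ?thesis by simp
    qed
    ultimately show ?thesis unfolding Z_def m_def by simp
  qed
  have indepZ: "SR.indep_vars (\<lambda>_. borel) Z UNIV"
  proof -
    have R: "SR.indep_vars (\<lambda>j. PiM ({..<N} \<times> {j}) (\<lambda>_. borel)) (\<lambda>j \<omega>. restrict (\<lambda>k. X k \<omega>) ({..<N} \<times> {j})) UNIV"
      by (rule SR.indep_vars_restrict[OF indepX]) (auto simp: disjoint_family_on_def)
    have "SR.indep_vars (\<lambda>_. borel) (\<lambda>j \<omega>. (\<lambda>f. (1 / real N) * (\<Sum>k\<in>{..<N} \<times> {j}. f k)) (restrict (\<lambda>k. X k \<omega>) ({..<N} \<times> {j}))) UNIV"
      by (rule SR.indep_vars_compose2[OF R]) measurable
    moreover have "(\<lambda>j \<omega>. (\<lambda>f. (1 / real N) * (\<Sum>k\<in>{..<N} \<times> {j}. f k)) (restrict (\<lambda>k. X k \<omega>) ({..<N} \<times> {j}))) = Z"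
      by (auto simp: Z_def fun_eq_iff intro!: sum.cong)
    ultimately show ?thesis by simp
  qed
  have Zm[measurable]: "Z j \<in> borel_measurable ?SR" for j
    using distZ[of j] by (simp add: distributed_def)
  have agg: "aggregate N \<sigma> gbar \<omega> = (\<chi> j. Z j \<omega>)" for \<omega>
  proof (subst vec_eq_iff, intro allI)
    fix j :: 'm
    have e: "{..<N} \<times> {j} = (\<lambda>i. (i, j)) ` {..<N}" by auto
    have "(\<Sum>k\<in>{..<N} \<times> {j}. hq \<sigma> (gbar (fst k) $ snd k) (\<omega> k)) = (\<Sum>i<N. hq \<sigma> (gbar i $ j) (\<omega> (i, j)))"
      unfolding e by (subst sum.reindex) (auto simp: inj_on_def)
    then show "aggregate N \<sigma> gbar \<omega> $ j = (\<chi> j. Z j \<omega>) $ j"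
      by (simp add: aggregate_def hq_def split_beta Z_def X_def g_def)
  qed
  have "distr ?SR borel (aggregate N \<sigma> gbar) = distr ?SR borel (\<lambda>\<omega>. (\<lambda>f. \<chi> j. f j) (\<lambda>j\<in>UNIV. Z j \<omega>))"
    by (rule distr_cong) (simp_all add: agg)
  also have "\<dots> = distr (distr ?SR (PiM UNIV (\<lambda>_. borel)) (\<lambda>\<omega>. \<lambda>j\<in>UNIV. Z j \<omega>)) borel (\<lambda>f. \<chi> j. f j)"
    by (subst distr_distr) (simp_all add: comp_def)
  also have "distr ?SR (PiM UNIV (\<lambda>_. borel)) (\<lambda>\<omega>. \<lambda>j\<in>UNIV. Z j \<omega>) = PiM UNIV (\<lambda>j. distr ?SR borel (Z j))"
    using indepZ by (subst (asm) SR.indep_vars_iff_distr_eq_PiM') auto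
  also have "PiM UNIV (\<lambda>j. distr ?SR borel (Z j)) = PiM UNIV (\<lambda>j. density lborel (normal_density (m j) (\<sigma> / sqrt (real N))))"
  proof (rule PiM_cong)
    fix j :: 'm
    have "distr ?SR borel (Z j) = distr ?SR lborel (Z j)" by (rule distr_cong) simp_all
    then show "distr ?SR borel (Z j) = density lborel (normal_density (m j) (\<sigma> / sqrt (real N)))"
      using distZ[of j] by (simp add: distributed_def)
  qed simp
  also have "distr (PiM UNIV (\<lambda>j. density lborel (normal_density (m j) (\<sigma> / sqrt (real N))))) borel (\<lambda>f. \<chi> j. f j)
      = gaussian_vec ((1 / real N) *\<^sub>R (\<Sum>i<N. gbar i)) (\<sigma> / sqrt (real N))"
    by (subst gaussian_vec_distr) (use s Npos in \<open>simp_all add: m_def\<close>)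
  finally show ?thesis .
qed

lemma prob_space_std: "prob_space (density lborel std_normal_density)"
  by (rule prob_space_normal_density) simp

lemma cont_std: "continuous_on S std_normal_density"
proof -
  have e: "std_normal_density = (\<lambda>x. (1 / sqrt (2 * pi)) * exp (- x\<^sup>2 / 2))"
    by (rule ext) (rule std_normal_density_def)
  show ?thesis unfolding e by (intro continuous_intros) auto
qed

lemma Phi_split:
  assumes "a \<le> y"
  shows "Phi y = Phi a + integral {a..y} std_normal_density"
proof -
  interpret P: prob_space "density lborel std_normal_density" by (rule prob_space_std)
  have "{..y} = {..a} \<union> {a<..y}" using assms by auto
  then have "Phi y = measure (density lborel std_normal_density) ({..a} \<union> {a<..y})" by (simp add: Phi_def)
  also have "\<dots> = Phi a + measure (density lborel std_normal_density) {a<..y}"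
  proof -
    have "{..a} \<inter> {a<..y} = {}" by auto
    then show ?thesis using P.finite_measure_Union[of "{..a}" "{a<..y}"] by (simp add: Phi_def)
  qed
  also have "measure (density lborel std_normal_density) {a<..y} = integral {a..y} std_normal_density"
  proof -
    have int: "(std_normal_density has_integral integral {a..y} std_normal_density) {a..y}"
      by (intro integrable_integral integrable_continuous_interval cont_std)
    have nn: "0 \<le> integral {a..y} std_normal_density"
      by (rule integral_nonneg[OF has_integral_integrable[OF int]]) simp
    have "emeasure (density lborel std_normal_density) {a<..y} = (\<integral>\<^sup>+x. ennreal (std_normal_density x) * indicator {a<..y} x \<partial>lborel)"
      by (subst emeasure_density) auto
    also have "\<dots> = (\<integral>\<^sup>+x. ennreal (std_normal_density x) * indicator {a..y} x \<partial>lborel)"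
      by (rule nn_integral_cong_AE) (use AE_lborel_singleton[of a] in \<open>eventually_elim, auto simp: indicator_def\<close>)
    also have "\<dots> = ennreal (integral {a..y} std_normal_density)"
      by (rule nn_integral_has_integral_lebesgue'[OF _ int]) simp
    finally show ?thesis
      using nn by (simp add: measure_def)
  qed
  finally show ?thesis .
qed

lemma Phi_deriv: "(Phi has_real_derivative std_normal_density x) (at x)"
proof -
  let ?a = "x - 1" and ?b = "x + 1"
  let ?F = "\<lambda>y. Phi ?a + integral {?a..y} std_normal_density"
  have cont: "continuous_on {?a..?b} std_normal_density"
    by (rule cont_std)
  have "((\<lambda>y. integral {?a..y} std_normal_density) has_real_derivative std_normal_density x) (at x within {?a..?b})"
    by (rule integral_has_real_derivative[OF cont]) auto
  then have "((\<lambda>y. integral {?a..y} std_normal_density) has_real_derivative std_normal_density x) (at x)"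
    by (simp add: at_within_Icc_at)
  then have "(?F has_real_derivative std_normal_density x) (at x)"
    by (auto intro!: derivative_eq_intros)
  then show ?thesis
    by (rule has_field_derivative_transform_within_open[where S="{?a<..<?b}"]) (auto intro!: Phi_split[symmetric])
qed

lemma Phi_tail:
  assumes b: "0 < b"
  shows "measure (density lborel (normal_density a b)) {t<..} = Phi ((a - t) / b)"
proof -
  have "emeasure (density lborel (normal_density a b)) {t<..} = (\<integral>\<^sup>+z. ennreal (normal_density a b z) * indicator {t<..} z \<partial>lborel)"
    by (subst emeasure_density) auto
  also have "\<dots> = ennreal \<bar>- b\<bar> * (\<integral>\<^sup>+y. ennreal (normal_density a b (a + (- b) * y)) * indicator {t<..} (a + (- b) * y) \<partial>lborel)"
    by (rule nn_integral_real_affine) (use b in auto)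
  also have "\<dots> = (\<integral>\<^sup>+y. ennreal (std_normal_density y) * indicator {..<(a - t) / b} y \<partial>lborel)"
  proof -
    have "ennreal b * (ennreal (normal_density a b (a + (- b) * y)) * indicator {t<..} (a + (- b) * y))
        = ennreal (std_normal_density y) * indicator {..<(a - t) / b} y" for y
    proof -
      have "b * normal_density a b (a + (- b) * y) = std_normal_density y"
        using b by (simp add: normal_density_def power_mult_distrib real_sqrt_mult field_simps)
      moreover have "(t < a + (- b) * y) \<longleftrightarrow> y < (a - t) / b"
        using b by (simp add: field_simps)
      ultimately show ?thesis using b
        by (auto simp: indicator_def ennreal_mult'[symmetric])
    qed
    then show ?thesis using b
      by (simp add: nn_integral_cmult[symmetric] mult.assoc[symmetric])
  qed
  also have "\<dots> = (\<integral>\<^sup>+y. ennreal (std_normal_density y) * indicator {..(a - t) / b} y \<partial>lborel)"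
    by (rule nn_integral_cong_AE) (use AE_lborel_singleton[of "(a - t) / b"] in \<open>eventually_elim, auto simp: indicator_def\<close>)
  also have "\<dots> = emeasure (density lborel std_normal_density) {..(a - t) / b}"
    by (subst emeasure_density) auto
  finally show ?thesis
    by (simp add: measure_def Phi_def)
qed

definition hs :: "real \<Rightarrow> real \<Rightarrow> real" where
  "hs \<epsilon> r = Phi (r/2 - \<epsilon>/r) - exp \<epsilon> * Phi (- r/2 - \<epsilon>/r)"

lemma hs_mono:
  assumes r1: "0 < r1" and le: "r1 \<le> r2"
  shows "hs \<epsilon> r1 \<le> hs \<epsilon> r2"
proof (rule DERIV_nonneg_imp_nondecreasing[OF le])
  fix x assume x1: "r1 \<le> x" and x2: "x \<le> r2"
  then have x: "0 < x" using r1 by simp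
  have i1: "((\<lambda>r. r/2 - \<epsilon>/r) has_real_derivative (1/2 + \<epsilon>/x\<^sup>2)) (at x)"
    using x by (auto intro!: derivative_eq_intros simp: power2_eq_square field_simps)
  have i2: "((\<lambda>r. - r/2 - \<epsilon>/r) has_real_derivative (-1/2 + \<epsilon>/x\<^sup>2)) (at x)"
    using x by (auto intro!: derivative_eq_intros simp: power2_eq_square field_simps)
  have d1: "((\<lambda>r. Phi (r/2 - \<epsilon>/r)) has_real_derivative std_normal_density (x/2 - \<epsilon>/x) * (1/2 + \<epsilon>/x\<^sup>2)) (at x)"
    by (rule DERIV_chain2[OF Phi_deriv i1])
  have d2: "((\<lambda>r. Phi (- r/2 - \<epsilon>/r)) has_real_derivative std_normal_density (- x/2 - \<epsilon>/x) * (-1/2 + \<epsilon>/x\<^sup>2)) (at x)"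
    by (rule DERIV_chain2[OF Phi_deriv i2])
  have d: "(hs \<epsilon> has_real_derivative
      std_normal_density (x/2 - \<epsilon>/x) * (1/2 + \<epsilon>/x\<^sup>2) - exp \<epsilon> * (std_normal_density (- x/2 - \<epsilon>/x) * (-1/2 + \<epsilon>/x\<^sup>2))) (at x)"
    unfolding hs_def[abs_def] by (intro DERIV_diff DERIV_cmult d1 d2)
  have key: "std_normal_density (x/2 - \<epsilon>/x) = exp \<epsilon> * std_normal_density (- x/2 - \<epsilon>/x)"
  proof -
    have eq: "- (x/2 - \<epsilon>/x)\<^sup>2 / 2 = \<epsilon> + (- (- x/2 - \<epsilon>/x)\<^sup>2 / 2)"
      using x by (simp add: power2_eq_square field_simps)
    have "exp (- (x/2 - \<epsilon>/x)\<^sup>2 / 2) = exp \<epsilon> * exp (- (- x/2 - \<epsilon>/x)\<^sup>2 / 2)"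
      by (simp only: eq exp_add)
    then show ?thesis unfolding std_normal_density_def by simp
  qed
  have "std_normal_density (x/2 - \<epsilon>/x) * (1/2 + \<epsilon>/x\<^sup>2) - exp \<epsilon> * (std_normal_density (- x/2 - \<epsilon>/x) * (-1/2 + \<epsilon>/x\<^sup>2))
      = std_normal_density (x/2 - \<epsilon>/x)"
    unfolding key by (simp add: algebra_simps)
  then show "\<exists>y. (hs \<epsilon> has_real_derivative y) (at x) \<and> 0 \<le> y"
    using d by (intro exI[of _ "std_normal_density (x/2 - \<epsilon>/x)"]) simp
qed

lemma indep_coords_gen:
  assumes ne: "I \<noteq> {}" and M: "\<And>i. i \<in> I \<Longrightarrow> prob_space (M i)"
  shows "prob_space.indep_vars (PiM I M) M (\<lambda>i \<omega>. \<omega> i) I"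
proof -
  interpret P: prob_space "PiM I M" by (rule prob_space_PiM) (rule M)
  have "distr (PiM I M) (PiM I M) (\<lambda>\<omega>. \<lambda>k\<in>I. \<omega> k) = distr (PiM I M) (PiM I M) (\<lambda>\<omega>. \<omega>)"
    by (rule distr_cong) (auto simp: space_PiM PiE_def extensional_def restrict_def fun_eq_iff)
  also have "\<dots> = PiM I M" by simp
  also have "\<dots> = PiM I (\<lambda>k. distr (PiM I M) (M k) (\<lambda>\<omega>. \<omega> k))"
    by (intro PiM_cong refl distr_PiM_component[symmetric] M) auto
  finally show ?thesis
    by (subst P.indep_vars_iff_distr_eq_PiM'[OF ne]) auto
qed

definition Gd :: "real ^ 'm::finite \<Rightarrow> real \<Rightarrow> real ^ 'm \<Rightarrow> real" where
  "Gd \<theta> s x = (\<Prod>j\<in>UNIV. normal_density (\<theta> $ j) s (x $ j))"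

lemma Gd_nonneg: "0 \<le> Gd \<theta> s x"
  unfolding Gd_def by (intro prod_nonneg) auto

lemma Gd_measurable[measurable]: "Gd \<theta> s \<in> borel_measurable borel"
  unfolding Gd_def by measurable

lemma normal_density_ratio:
  assumes s: "0 < s"
  shows "normal_density a s y = normal_density b s y * exp ((a - b) * (y - (a + b) / 2) / s\<^sup>2)"
proof -
  have "- (y - a)\<^sup>2 / (2 * s\<^sup>2) = - (y - b)\<^sup>2 / (2 * s\<^sup>2) + (a - b) * (y - (a + b) / 2) / s\<^sup>2"
    using s by (simp add: power2_eq_square field_simps)
  then show ?thesis unfolding normal_density_def by (simp add: mult_exp_exp algebra_simps)
qed

lemma Gd_ratio:
  assumes s: "0 < s"
  shows "Gd \<mu> s x = Gd \<nu> s x * exp ((\<Sum>j\<in>UNIV. (\<mu> $ j - \<nu> $ j) * (x $ j - (\<mu> $ j + \<nu> $ j) / 2)) / s\<^sup>2)"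
proof -
  have "Gd \<mu> s x = (\<Prod>j\<in>UNIV. normal_density (\<nu> $ j) s (x $ j) * exp ((\<mu> $ j - \<nu> $ j) * (x $ j - (\<mu> $ j + \<nu> $ j) / 2) / s\<^sup>2))"
    unfolding Gd_def by (intro prod.cong refl normal_density_ratio s)
  also have "\<dots> = Gd \<nu> s x * exp (\<Sum>j\<in>UNIV. (\<mu> $ j - \<nu> $ j) * (x $ j - (\<mu> $ j + \<nu> $ j) / 2) / s\<^sup>2)"
    by (simp add: prod.distrib Gd_def exp_sum)
  also have "(\<Sum>j\<in>UNIV. (\<mu> $ j - \<nu> $ j) * (x $ j - (\<mu> $ j + \<nu> $ j) / 2) / s\<^sup>2) = (\<Sum>j\<in>UNIV. (\<mu> $ j - \<nu> $ j) * (x $ j - (\<mu> $ j + \<nu> $ j) / 2)) / s\<^sup>2"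
    by (simp add: sum_divide_distrib)
  finally show ?thesis .
qed

lemma emeasure_gaussian_vec:
  "A \<in> sets borel \<Longrightarrow> emeasure (gaussian_vec \<theta> s) A = (\<integral>\<^sup>+x. ennreal (Gd \<theta> s x) * indicator A x \<partial>lborel)"
  unfolding gaussian_vec_def Gd_def[symmetric] by (subst emeasure_density) auto

lemma prob_space_gaussian_vec: "0 < s \<Longrightarrow> prob_space (gaussian_vec \<theta> s)"
  by (subst gaussian_vec_distr) (auto intro!: prob_space.prob_space_distr prob_space_PiM prob_space_normal_density)

lemma prob_halfspace:
  fixes \<theta> w m :: "real ^ 'm::finite"
  assumes s: "0 < s" and w: "w \<noteq> 0"
  shows "measure (gaussian_vec \<theta> s) {x. t < (\<Sum>j\<in>UNIV. w $ j * (x $ j - m $ j))}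
       = Phi (((\<Sum>j\<in>UNIV. w $ j * (\<theta> $ j - m $ j)) - t) / (s * norm w))"
proof -
  let ?Q = "PiM (UNIV :: 'm set) (\<lambda>j. density lborel (normal_density (\<theta> $ j) s))"
  interpret Q: prob_space ?Q by (intro prob_space_PiM prob_space_normal_density s)
  define J where "J = {j. w $ j \<noteq> 0}"
  have neJ: "J \<noteq> {}" using w unfolding J_def by (auto simp: vec_eq_iff)
  define Y where "Y j y = (- w $ j * m $ j) + w $ j * y j" for j and y :: "'m \<Rightarrow> real"
  define T where "T y = (\<Sum>j\<in>UNIV. w $ j * (y j - m $ j))" for y :: "'m \<Rightarrow> real"
  have Tm[measurable]: "T \<in> borel_measurable ?Q" unfolding T_def by measurable
  have TY: "T y = (\<Sum>j\<in>J. Y j y)" for y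
  proof -
    have "T y = (\<Sum>j\<in>J. w $ j * (y j - m $ j))"
      unfolding T_def by (rule sum.mono_neutral_right) (auto simp: J_def)
    then show ?thesis by (simp add: Y_def algebra_simps)
  qed
  have coord: "distributed ?Q lborel (\<lambda>y. y j) (normal_density (\<theta> $ j) s)" for j
  proof -
    have "distr ?Q lborel (\<lambda>y. y j) = distr ?Q (density lborel (normal_density (\<theta> $ j) s)) (\<lambda>y. y j)"
      by (rule distr_cong) simp_all
    also have "\<dots> = density lborel (normal_density (\<theta> $ j) s)"
      by (intro distr_PiM_component prob_space_normal_density s) simp
    finally show ?thesis unfolding distributed_def by simp
  qed
  have distY: "distributed ?Q lborel (Y j) (normal_density (- w $ j * m $ j + w $ j * \<theta> $ j) (\<bar>w $ j\<bar> * s))" if "j \<in> J" for j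
    unfolding Y_def[abs_def] using that by (intro Q.normal_density_affine coord s) (auto simp: J_def)
  have indY: "Q.indep_vars (\<lambda>_. borel) Y J"
  proof -
    have "Q.indep_vars (\<lambda>j. density lborel (normal_density (\<theta> $ j) s)) (\<lambda>j y. y j) UNIV"
      by (rule indep_coords_gen) (auto intro: prob_space_normal_density s)
    then have "Q.indep_vars (\<lambda>_. borel) (\<lambda>j y. (\<lambda>x. - w $ j * m $ j + w $ j * x) (y j)) UNIV"
      by (rule Q.indep_vars_compose2) measurable
    then show ?thesis unfolding Y_def by (rule Q.indep_vars_subset) simp
  qed
  have distT0: "distributed ?Q lborel (\<lambda>y. \<Sum>j\<in>J. Y j y)
      (normal_density (\<Sum>j\<in>J. - w $ j * m $ j + w $ j * \<theta> $ j) (sqrt (\<Sum>j\<in>J. (\<bar>w $ j\<bar> * s)\<^sup>2)))"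
    by (rule Q.sum_indep_normal[OF _ neJ indY]) (use s distY in \<open>auto simp: J_def\<close>)
  have mean: "(\<Sum>j\<in>J. - w $ j * m $ j + w $ j * \<theta> $ j) = (\<Sum>j\<in>UNIV. w $ j * (\<theta> $ j - m $ j))"
  proof -
    have "(\<Sum>j\<in>J. - w $ j * m $ j + w $ j * \<theta> $ j) = (\<Sum>j\<in>J. w $ j * (\<theta> $ j - m $ j))"
      by (intro sum.cong) (auto simp: algebra_simps)
    also have "\<dots> = (\<Sum>j\<in>UNIV. w $ j * (\<theta> $ j - m $ j))"
      by (rule sum.mono_neutral_left) (auto simp: J_def)
    finally show ?thesis .
  qed
  have sd: "sqrt (\<Sum>j\<in>J. (\<bar>w $ j\<bar> * s)\<^sup>2) = s * norm w"
  proof -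
    have "(\<Sum>j\<in>J. (\<bar>w $ j\<bar> * s)\<^sup>2) = s\<^sup>2 * (\<Sum>j\<in>UNIV. (w $ j)\<^sup>2)"
      by (subst sum.mono_neutral_left[of UNIV J]) (auto simp: J_def power_mult_distrib sum_distrib_left mult.commute)
    then show ?thesis using s by (simp add: norm_vec_def L2_set_def real_sqrt_mult)
  qed
  have distT: "distributed ?Q lborel T (normal_density (\<Sum>j\<in>UNIV. w $ j * (\<theta> $ j - m $ j)) (s * norm w))"
    using distT0 unfolding mean sd TY[symmetric] by (simp add: fun_eq_iff TY[abs_def])
  have "measure (gaussian_vec \<theta> s) {x. t < (\<Sum>j\<in>UNIV. w $ j * (x $ j - m $ j))}
      = measure ?Q ((\<lambda>f. \<chi> j. f j) -` {x. t < (\<Sum>j\<in>UNIV. w $ j * (x $ j - m $ j))} \<inter> space ?Q)"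
    by (subst gaussian_vec_distr[OF s]) (rule measure_distr; measurable)
  also have "(\<lambda>f. \<chi> j. f j) -` {x. t < (\<Sum>j\<in>UNIV. w $ j * (x $ j - m $ j))} \<inter> space ?Q = T -` {t<..} \<inter> space ?Q"
    by (auto simp: T_def)
  also have "measure ?Q (T -` {t<..} \<inter> space ?Q) = measure (distr ?Q lborel T) {t<..}"
    by (rule measure_distr[symmetric]) auto
  also have "\<dots> = measure (density lborel (normal_density (\<Sum>j\<in>UNIV. w $ j * (\<theta> $ j - m $ j)) (s * norm w))) {t<..}"
    using distT by (simp add: distributed_def)
  also have "\<dots> = Phi (((\<Sum>j\<in>UNIV. w $ j * (\<theta> $ j - m $ j)) - t) / (s * norm w))"
    by (rule Phi_tail) (use s w in simp)
  finally show ?thesis .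
qed

lemma hockey_core:
  fixes \<mu> \<nu> :: "real ^ 'm::finite"
  assumes s: "0 < s" and ne: "\<mu> \<noteq> \<nu>" and S: "S \<in> sets borel"
  shows "measure (gaussian_vec \<mu> s) S \<le> exp \<epsilon> * measure (gaussian_vec \<nu> s) S + hs \<epsilon> (norm (\<mu> - \<nu>) / s)"
    and "0 \<le> hs \<epsilon> (norm (\<mu> - \<nu>) / s)"
proof -
  define w where "w = \<mu> - \<nu>"
  define m where "m = (1/2) *\<^sub>R (\<mu> + \<nu>)"
  define d where "d = norm w"
  define E where "E = exp \<epsilon>"
  define L where "L x = (\<Sum>j\<in>UNIV. w $ j * (x $ j - m $ j))" for x :: "real ^ 'm"
  define H where "H = {x. s\<^sup>2 * \<epsilon> < L x}"
  have w0: "w \<noteq> 0" using ne by (simp add: w_def)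
  have d0: "0 < d" using w0 by (simp add: d_def)
  have E0: "0 < E" by (simp add: E_def)
  have Lm[measurable]: "L \<in> borel_measurable borel" unfolding L_def by measurable
  have Hm[measurable]: "H \<in> sets borel" unfolding H_def by measurable
  have ratio: "Gd \<mu> s x = Gd \<nu> s x * exp (L x / s\<^sup>2)" for x
  proof -
    have "(\<Sum>j\<in>UNIV. (\<mu> $ j - \<nu> $ j) * (x $ j - (\<mu> $ j + \<nu> $ j) / 2)) = L x"
      unfolding L_def w_def m_def by (intro sum.cong) (auto simp: field_simps)
    then show ?thesis using Gd_ratio[OF s, of \<mu> x \<nu>] by simp
  qed
  interpret P\<mu>: prob_space "gaussian_vec \<mu> s" by (rule prob_space_gaussian_vec[OF s])
  interpret P\<nu>: prob_space "gaussian_vec \<nu> s" by (rule prob_space_gaussian_vec[OF s])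
  define X where "X = (\<integral>\<^sup>+x. ennreal (Gd \<mu> s x - E * Gd \<nu> s x) * indicator H x \<partial>lborel)"
  have inH: "E * Gd \<nu> s x \<le> Gd \<mu> s x" if "x \<in> H" for x
  proof -
    have "\<epsilon> < L x / s\<^sup>2" using that s by (simp add: H_def field_simps)
    then have "E \<le> exp (L x / s\<^sup>2)" unfolding E_def by simp
    from mult_right_mono[OF this Gd_nonneg[of \<nu> s x]] show ?thesis unfolding ratio by (simp add: mult.commute)
  qed
  have notH: "Gd \<mu> s x \<le> E * Gd \<nu> s x" if "x \<notin> H" for x
  proof -
    have "L x / s\<^sup>2 \<le> \<epsilon>" using that s by (simp add: H_def field_simps)
    then have "exp (L x / s\<^sup>2) \<le> E" unfolding E_def by simp
    from mult_right_mono[OF this Gd_nonneg[of \<nu> s x]] show ?thesis unfolding ratio by (simp add: mult.commute)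
  qed
  have bound: "emeasure (gaussian_vec \<mu> s) S \<le> ennreal E * emeasure (gaussian_vec \<nu> s) S + X"
  proof -
    have "emeasure (gaussian_vec \<mu> s) S = (\<integral>\<^sup>+x. ennreal (Gd \<mu> s x) * indicator S x \<partial>lborel)"
      by (rule emeasure_gaussian_vec[OF S])
    also have "\<dots> \<le> (\<integral>\<^sup>+x. ennreal E * (ennreal (Gd \<nu> s x) * indicator S x) + ennreal (Gd \<mu> s x - E * Gd \<nu> s x) * indicator H x \<partial>lborel)"
    proof (rule nn_integral_mono)
      fix x
      show "ennreal (Gd \<mu> s x) * indicator S x \<le> ennreal E * (ennreal (Gd \<nu> s x) * indicator S x) + ennreal (Gd \<mu> s x - E * Gd \<nu> s x) * indicator H x"
      proof (cases "x \<in> H")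
        case True
        have "ennreal (Gd \<mu> s x) = ennreal (E * Gd \<nu> s x) + ennreal (Gd \<mu> s x - E * Gd \<nu> s x)"
          using inH[OF True] E0 Gd_nonneg[of \<nu> s x] by (subst ennreal_plus[symmetric]) auto
        then show ?thesis using True E0 Gd_nonneg[of \<nu> s x]
          by (cases "x \<in> S") (auto simp: indicator_def ennreal_mult)
      next
        case False
        then have "ennreal (Gd \<mu> s x) \<le> ennreal E * ennreal (Gd \<nu> s x)"
          using notH[OF False] E0 Gd_nonneg[of \<nu> s x] by (simp add: ennreal_mult[symmetric])
        then show ?thesis using False by (cases "x \<in> S") (auto simp: indicator_def)
      qed
    qed
    also have "\<dots> = ennreal E * (\<integral>\<^sup>+x. ennreal (Gd \<nu> s x) * indicator S x \<partial>lborel) + X"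
      unfolding X_def using S by (subst nn_integral_add) (auto simp: nn_integral_cmult)
    also have "(\<integral>\<^sup>+x. ennreal (Gd \<nu> s x) * indicator S x \<partial>lborel) = emeasure (gaussian_vec \<nu> s) S"
      by (rule emeasure_gaussian_vec[OF S, symmetric])
    finally show ?thesis .
  qed
  have splitH: "emeasure (gaussian_vec \<mu> s) H = X + ennreal E * emeasure (gaussian_vec \<nu> s) H"
  proof -
    have "emeasure (gaussian_vec \<mu> s) H = (\<integral>\<^sup>+x. ennreal (Gd \<mu> s x) * indicator H x \<partial>lborel)"
      by (rule emeasure_gaussian_vec[OF Hm])
    also have "\<dots> = (\<integral>\<^sup>+x. ennreal (Gd \<mu> s x - E * Gd \<nu> s x) * indicator H x + ennreal E * (ennreal (Gd \<nu> s x) * indicator H x) \<partial>lborel)"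
    proof (rule nn_integral_cong)
      fix x
      show "ennreal (Gd \<mu> s x) * indicator H x = ennreal (Gd \<mu> s x - E * Gd \<nu> s x) * indicator H x + ennreal E * (ennreal (Gd \<nu> s x) * indicator H x)"
      proof (cases "x \<in> H")
        case True
        have "ennreal (Gd \<mu> s x) = ennreal (Gd \<mu> s x - E * Gd \<nu> s x) + ennreal (E * Gd \<nu> s x)"
          using inH[OF True] E0 Gd_nonneg[of \<nu> s x] by (subst ennreal_plus[symmetric]) auto
        then show ?thesis using True E0 Gd_nonneg[of \<nu> s x] by (auto simp: ennreal_mult)
      qed simp
    qed
    also have "\<dots> = X + ennreal E * (\<integral>\<^sup>+x. ennreal (Gd \<nu> s x) * indicator H x \<partial>lborel)"
      unfolding X_def by (subst nn_integral_add) (auto simp: nn_integral_cmult)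
    also have "(\<integral>\<^sup>+x. ennreal (Gd \<nu> s x) * indicator H x \<partial>lborel) = emeasure (gaussian_vec \<nu> s) H"
      by (rule emeasure_gaussian_vec[OF Hm, symmetric])
    finally show ?thesis .
  qed
  have Xfin: "X \<noteq> \<infinity>"
    using splitH P\<mu>.emeasure_finite[of H] by (auto simp: top_add)
  have X_eq: "enn2real X = measure (gaussian_vec \<mu> s) H - E * measure (gaussian_vec \<nu> s) H"
  proof -
    have f1: "ennreal E * emeasure (gaussian_vec \<nu> s) H \<noteq> \<top>"
      using P\<nu>.emeasure_finite[of H] by (simp add: ennreal_mult_eq_top_iff)
    have "measure (gaussian_vec \<mu> s) H = enn2real X + enn2real (ennreal E * emeasure (gaussian_vec \<nu> s) H)"
      unfolding measure_def splitH using Xfin f1 by (intro enn2real_plus) (auto simp: less_top)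
    also have "enn2real (ennreal E * emeasure (gaussian_vec \<nu> s) H) = E * measure (gaussian_vec \<nu> s) H"
      using E0 by (simp add: enn2real_mult measure_def)
    finally have "measure (gaussian_vec \<mu> s) H = enn2real X + E * measure (gaussian_vec \<nu> s) H" .
    then show ?thesis by simp
  qed
  have dd: "d\<^sup>2 = (\<Sum>j\<in>UNIV. (w $ j)\<^sup>2)"
    unfolding d_def norm_vec_def L2_set_def by (simp add: sum_nonneg)
  have PmuH: "measure (gaussian_vec \<mu> s) H = Phi ((d / s) / 2 - \<epsilon> / (d / s))"
  proof -
    have A: "(\<Sum>j\<in>UNIV. w $ j * (\<mu> $ j - m $ j)) = d\<^sup>2 / 2"
      unfolding dd by (simp add: sum_divide_distrib w_def m_def power2_eq_square field_simps)
    have arg: "(d\<^sup>2 / 2 - s\<^sup>2 * \<epsilon>) / (s * d) = (d / s) / 2 - \<epsilon> / (d / s)"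
      using s d0 by (simp add: field_simps power2_eq_square)
    show ?thesis
      unfolding H_def L_def prob_halfspace[OF s w0] A d_def[symmetric] arg ..
  qed
  have PnuH: "measure (gaussian_vec \<nu> s) H = Phi (- (d / s) / 2 - \<epsilon> / (d / s))"
  proof -
    have A: "(\<Sum>j\<in>UNIV. w $ j * (\<nu> $ j - m $ j)) = - d\<^sup>2 / 2"
      unfolding dd by (simp add: sum_divide_distrib w_def m_def power2_eq_square field_simps sum_negf[symmetric])
    have arg: "(- d\<^sup>2 / 2 - s\<^sup>2 * \<epsilon>) / (s * d) = - (d / s) / 2 - \<epsilon> / (d / s)"
      using s d0 by (simp add: field_simps power2_eq_square)
    show ?thesis
      unfolding H_def L_def prob_halfspace[OF s w0] A d_def[symmetric] arg ..
  qed
  have hsX: "hs \<epsilon> (norm (\<mu> - \<nu>) / s) = enn2real X"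
    unfolding X_eq PmuH PnuH hs_def E_def d_def w_def by simp
  show "0 \<le> hs \<epsilon> (norm (\<mu> - \<nu>) / s)" unfolding hsX by simp
  show "measure (gaussian_vec \<mu> s) S \<le> exp \<epsilon> * measure (gaussian_vec \<nu> s) S + hs \<epsilon> (norm (\<mu> - \<nu>) / s)"
  proof -
    have f2: "ennreal E * emeasure (gaussian_vec \<nu> s) S \<noteq> \<top>"
      using P\<nu>.emeasure_finite[of S] by (simp add: ennreal_mult_eq_top_iff)
    have "enn2real (emeasure (gaussian_vec \<mu> s) S) \<le> enn2real (ennreal E * emeasure (gaussian_vec \<nu> s) S + X)"
    proof (rule enn2real_mono[OF bound])
      show "ennreal E * emeasure (gaussian_vec \<nu> s) S + X < \<top>"
        using Xfin f2 by (simp add: less_top[symmetric])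
    qed
    also have "\<dots> = enn2real (ennreal E * emeasure (gaussian_vec \<nu> s) S) + enn2real X"
      using Xfin f2 by (intro enn2real_plus) (auto simp: less_top[symmetric])
    also have "enn2real (ennreal E * emeasure (gaussian_vec \<nu> s) S) = E * measure (gaussian_vec \<nu> s) S"
      using E0 by (simp add: enn2real_mult measure_def)
    finally show ?thesis unfolding hsX E_def measure_def .
  qed
qed

lemma hs_nonneg:
  assumes s: "0 < s" and D: "0 < \<Delta>"
  shows "0 \<le> hs \<epsilon> (\<Delta> / s)"
proof -
  define \<mu> :: "real ^ 'm::finite" where "\<mu> = \<Delta> *\<^sub>R axis undefined 1"
  have ne: "\<mu> \<noteq> 0" using D by (simp add: \<mu>_def)
  have "norm (\<mu> - 0) = \<Delta>" using D by (simp add: \<mu>_def)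
  then show ?thesis using hockey_core(2)[OF s ne, of UNIV \<epsilon>] by simp
qed

lemma hockey:
  fixes \<mu> \<nu> :: "real ^ 'm::finite"
  assumes s: "0 < s" and D: "0 < \<Delta>" and e: "0 \<le> \<epsilon>" and dist: "norm (\<mu> - \<nu>) \<le> \<Delta>" and S: "S \<in> sets borel"
  shows "measure (gaussian_vec \<mu> s) S \<le> exp \<epsilon> * measure (gaussian_vec \<nu> s) S + hs \<epsilon> (\<Delta> / s)"
proof (cases "\<mu> = \<nu>")
  case True
  have "measure (gaussian_vec \<mu> s) S \<le> exp \<epsilon> * measure (gaussian_vec \<mu> s) S"
    using mult_right_mono[of 1 "exp \<epsilon>" "measure (gaussian_vec \<mu> s) S"] e by simp
  then show ?thesis using True hs_nonneg[OF s D, of \<epsilon>] by simp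
next
  case False
  have "hs \<epsilon> (norm (\<mu> - \<nu>) / s) \<le> hs \<epsilon> (\<Delta> / s)"
    using False s dist by (intro hs_mono divide_right_mono) auto
  then show ?thesis using hockey_core(1)[OF s False S, of \<epsilon>] by simp
qed

lemma finite_space_PiM_pmf:
  assumes K: "finite K"
  shows "finite (space (PiM K (\<lambda>_. measure_pmf (q :: bool pmf))))"
  using K by (simp add: space_PiM finite_PiE)

lemma sets_PiM_pmf_discrete:
  assumes K: "finite K"
  shows "sets (PiM K (\<lambda>_. measure_pmf (q :: bool pmf))) = sets (count_space (space (PiM K (\<lambda>_. measure_pmf q))))"
proof -
  let ?M = "PiM K (\<lambda>_. measure_pmf q)"
  have "A \<in> sets ?M" if A: "A \<subseteq> space ?M" for A
  proof -
    have fin: "finite A" using A finite_space_PiM_pmf[OF K] finite_subset by blast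
    have sing: "{x} \<in> sets ?M" if x: "x \<in> space ?M" for x
    proof -
      have "{x} = PiE K (\<lambda>k. {x k})"
        using x by (auto simp: space_PiM PiE_iff extensional_def fun_eq_iff)
      also have "\<dots> \<in> sets ?M" using K by (intro sets_PiM_I_finite) auto
      finally show ?thesis .
    qed
    have "A = (\<Union>x\<in>A. {x})" by auto
    also have "\<dots> \<in> sets ?M" using fin A sing by (intro sets.finite_UN) auto
    finally show ?thesis .
  qed
  then have "sets ?M = Pow (space ?M)" using sets.sets_into_space by blast
  then show ?thesis by simp
qed

lemma measurable_aggregate[measurable]:
  "aggregate N \<sigma> gbar \<in> borel_measurable (shared_rand N \<sigma>)"
proof -
  have *: "aggregate N \<sigma> gbar = (\<lambda>\<omega>. \<chi> j. (1 / real N) * (\<Sum>i<N. hq \<sigma> (gbar i $ j) (\<omega> (i, j))))"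
    by (rule ext) (simp add: aggregate_def hq_def split_beta vec_eq_iff sum_distrib_left)
  have c: "(\<lambda>\<omega>. \<omega> (i, j)) \<in> measurable (shared_rand N \<sigma>) (pair_law \<sigma>)" if "i < N" for i and j :: 'a
    unfolding shared_rand_def using that by (intro measurable_component_singleton) auto
  show ?thesis unfolding *
    by (intro measurable_vec_lambda_real borel_measurable_times borel_measurable_const borel_measurable_sum
              measurable_compose[OF c measurable_hq]) auto
qed

lemma finite_maskset: "finite {(i, k). i < N \<and> k < length ((D :: nat \<Rightarrow> 'd list) i)}"
proof -
  have "{(i, k). i < N \<and> k < length (D i)} = Sigma {..<N} (\<lambda>i. {..<length (D i)})" by auto
  then show ?thesis by simp
qed

definition meanv :: "real \<Rightarrow> real \<Rightarrow> ('d \<Rightarrow> real ^ 'm::finite) \<Rightarrow> (nat \<Rightarrow> 'd list) \<Rightarrow> nat \<Rightarrow> ((nat \<times> nat) \<Rightarrow> bool) \<Rightarrow> real ^ 'm" where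
  "meanv C B grad D N b = (1 / real N) *\<^sub>R (\<Sum>i<N. local_grad C B grad D b i)"

lemma mech_emeasure:
  fixes grad :: "'d \<Rightarrow> real ^ 'm::finite"
  assumes s: "0 < \<sigma>" and N: "N \<ge> 1" and S: "S \<in> sets borel"
  shows "emeasure (mechanism N C \<sigma> p B grad D) S
       = (\<integral>\<^sup>+b. emeasure (gaussian_vec (meanv C B grad D N b) (\<sigma> / sqrt (real N))) S \<partial>poisson_masks p N D)"
proof -
  let ?MK = "poisson_masks p N D"
  let ?SR = "shared_rand N \<sigma> :: ((nat \<times> 'm) \<Rightarrow> real \<times> real) measure"
  let ?F = "\<lambda>(b, \<omega>). aggregate N \<sigma> (local_grad C B grad D b) \<omega>"
  interpret SR: prob_space ?SR by (rule prob_space_shared_rand[OF s])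
  have finK: "finite {(i, k). i < N \<and> k < length (D i)}" by (rule finite_maskset)
  have setsMK: "sets ?MK = sets (count_space (space ?MK))"
    unfolding poisson_masks_def by (rule sets_PiM_pmf_discrete[OF finK])
  have Fm: "?F \<in> borel_measurable (?MK \<Otimes>\<^sub>M ?SR)"
  proof -
    have "?F \<in> borel_measurable (count_space (space ?MK) \<Otimes>\<^sub>M ?SR)"
    proof (rule measurable_pair_measure_countable1)
      show "countable (space ?MK)"
        unfolding poisson_masks_def by (intro countable_finite finite_space_PiM_pmf finK)
    qed simp
    moreover have "sets (?MK \<Otimes>\<^sub>M ?SR) = sets (count_space (space ?MK) \<Otimes>\<^sub>M ?SR)"
      by (intro sets_pair_measure_cong setsMK refl)
    ultimately show ?thesis by (simp cong: measurable_cong_sets)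
  qed
  have "emeasure (mechanism N C \<sigma> p B grad D) S = emeasure (?MK \<Otimes>\<^sub>M ?SR) (?F -` S \<inter> space (?MK \<Otimes>\<^sub>M ?SR))"
    unfolding mechanism_def by (rule emeasure_distr[OF Fm S])
  also have "\<dots> = (\<integral>\<^sup>+b. emeasure ?SR (Pair b -` (?F -` S \<inter> space (?MK \<Otimes>\<^sub>M ?SR))) \<partial>?MK)"
    by (rule SR.emeasure_pair_measure_alt) (rule measurable_sets[OF Fm S])
  also have "\<dots> = (\<integral>\<^sup>+b. emeasure (gaussian_vec (meanv C B grad D N b) (\<sigma> / sqrt (real N))) S \<partial>?MK)"
  proof (rule nn_integral_cong)
    fix b assume b: "b \<in> space ?MK"
    have "Pair b -` (?F -` S \<inter> space (?MK \<Otimes>\<^sub>M ?SR)) = aggregate N \<sigma> (local_grad C B grad D b) -` S \<inter> space ?SR"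
      using b by (auto simp: space_pair_measure)
    also have "emeasure ?SR \<dots> = emeasure (distr ?SR borel (aggregate N \<sigma> (local_grad C B grad D b))) S"
      by (rule emeasure_distr[symmetric]) (simp_all add: S)
    also have "\<dots> = emeasure (gaussian_vec (meanv C B grad D N b) (\<sigma> / sqrt (real N))) S"
      unfolding part1[OF s N] meanv_def ..
    finally show "emeasure ?SR (Pair b -` (?F -` S \<inter> space (?MK \<Otimes>\<^sub>M ?SR))) = emeasure (gaussian_vec (meanv C B grad D N b) (\<sigma> / sqrt (real N))) S" .
  qed
  finally show ?thesis .
qed

lemma norm_clip: assumes C: "0 < C" shows "norm (clip C x) \<le> C"
proof (cases "norm x \<le> C")
  case True
  then have "max 1 (norm x / C) = 1" using C by (simp add: max_def field_simps)
  then show ?thesis using True by (simp add: clip_def)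
next
  case False
  then have "max 1 (norm x / C) = norm x / C" using C by (simp add: max_def field_simps)
  then show ?thesis using False C by (simp add: clip_def)
qed

lemma neighbour_means:
  fixes grad :: "'d \<Rightarrow> real ^ 'm::finite" and D D' :: "nat \<Rightarrow> 'd list" and b :: "nat \<times> nat \<Rightarrow> bool"
  assumes i0: "i0 < N" and k0: "k0 < length (D i0)" and D'i0: "D' i0 = (D i0)[k0 := d']"
    and D'i: "\<And>i. i < N \<Longrightarrow> i \<noteq> i0 \<Longrightarrow> D' i = D i"
  defines "b0 \<equiv> b((i0, k0) := False)" and "b1 \<equiv> b((i0, k0) := True)"
  shows "meanv C B grad D' N b0 = meanv C B grad D N b0"
    and "meanv C B grad D N b1 = meanv C B grad D N b0 + (1 / (real N * B)) *\<^sub>R clip C (grad (D i0 ! k0))"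
    and "meanv C B grad D' N b1 = meanv C B grad D N b0 + (1 / (real N * B)) *\<^sub>R clip C (grad d')"
proof -
  define R where "R = (\<Sum>i\<in>{..<N} - {i0}. local_grad C B grad D b0 i)"
  have rest: "(\<Sum>i\<in>{..<N} - {i0}. local_grad C B grad X bb i) = R"
    if "X = D \<or> X = D'" "bb = b0 \<or> bb = b1" for X bb
    unfolding R_def
  proof (intro sum.cong refl)
    fix i assume i: "i \<in> {..<N} - {i0}"
    then have Xi: "X i = D i" using that(1) D'i by auto
    have "{k. k < length (X i) \<and> bb (i, k)} = {k. k < length (D i) \<and> b0 (i, k)}"
      using i that(2) Xi by (auto simp: b0_def b1_def)
    then show "local_grad C B grad X bb i = local_grad C B grad D b0 i"
      unfolding local_grad_def Xi by simp
  qed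
  have split: "meanv C B grad X N bb = (1 / real N) *\<^sub>R (local_grad C B grad X bb i0 + R)"
    if "X = D \<or> X = D'" "bb = b0 \<or> bb = b1" for X bb
  proof -
    have "(\<Sum>i<N. local_grad C B grad X bb i) = local_grad C B grad X bb i0 + (\<Sum>i\<in>{..<N} - {i0}. local_grad C B grad X bb i)"
      using i0 by (subst sum.remove[of "{..<N}" i0]) auto
    then show ?thesis unfolding meanv_def rest[OF that] by simp
  qed
  have len: "length (D' i0) = length (D i0)" using D'i0 by simp
  define T0 where "T0 = {k. k < length (D i0) \<and> b0 (i0, k)}"
  have T0k: "k0 \<notin> T0" by (simp add: T0_def b0_def)
  have T1: "{k. k < length (D i0) \<and> b1 (i0, k)} = insert k0 T0"
    using k0 by (auto simp: T0_def b0_def b1_def)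
  have finT0: "finite T0" by (simp add: T0_def)
  have eqT0: "(\<Sum>k\<in>T0. clip C (grad (D' i0 ! k))) = (\<Sum>k\<in>T0. clip C (grad (D i0 ! k)))"
  proof (intro sum.cong refl)
    fix k assume "k \<in> T0"
    then have "k \<noteq> k0" using T0k by auto
    then show "clip C (grad (D' i0 ! k)) = clip C (grad (D i0 ! k))" by (simp add: D'i0)
  qed
  have L0: "local_grad C B grad D' b0 i0 = local_grad C B grad D b0 i0"
    unfolding local_grad_def len T0_def[symmetric] eqT0 ..
  have L1: "local_grad C B grad D b1 i0 = local_grad C B grad D b0 i0 + (1 / B) *\<^sub>R clip C (grad (D i0 ! k0))"
    unfolding local_grad_def T1 T0_def[symmetric] using finT0 T0k
    by (simp add: scaleR_add_right add.commute)
  have L1': "local_grad C B grad D' b1 i0 = local_grad C B grad D b0 i0 + (1 / B) *\<^sub>R clip C (grad d')"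
  proof -
    have "D' i0 ! k0 = d'" using k0 D'i0 by simp
    then show ?thesis
      unfolding local_grad_def len T1 T0_def[symmetric] using finT0 T0k eqT0
      by (simp add: scaleR_add_right add.commute)
  qed
  show "meanv C B grad D' N b0 = meanv C B grad D N b0"
    using split[of D' b0] split[of D b0] L0 by simp
  show "meanv C B grad D N b1 = meanv C B grad D N b0 + (1 / (real N * B)) *\<^sub>R clip C (grad (D i0 ! k0))"
    using split[of D b1] split[of D b0] L1 by (simp add: scaleR_add_right algebra_simps)
  show "meanv C B grad D' N b1 = meanv C B grad D N b0 + (1 / (real N * B)) *\<^sub>R clip C (grad d')"
    using split[of D' b1] split[of D b0] L1' by (simp add: scaleR_add_right algebra_simps)
qed

lemma mix_ineq:
  fixes p e G0 G1 G1' \<delta> :: real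
  assumes p: "0 \<le> p" "p \<le> 1" and e: "1 \<le> e" and G: "0 \<le> G0" "0 \<le> G1" "0 \<le> G1'"
    and h1: "G1 \<le> e * G0 + \<delta>" and h2: "G1 \<le> e * G1' + \<delta>"
  shows "(1 - p) * G0 + p * G1 \<le> (1 + p * (e - 1)) * ((1 - p) * G0 + p * G1') + p * \<delta>"
proof -
  define E where "E = 1 + p * (e - 1)"
  have E1: "1 \<le> E" using p e by (simp add: E_def)
  have "p * (e - 1) \<le> e - 1" using p e by (intro mult_left_le_one_le) auto
  then have Ee: "E \<le> e" unfolding E_def by linarith
  have a: "(e - E) * G1 \<le> (e - E) * (e * G0 + \<delta>)" using Ee h1 by (intro mult_left_mono) auto
  have b: "E * G1 \<le> E * (e * G1' + \<delta>)" using E1 h2 by (intro mult_left_mono) auto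
  have "e * G1 \<le> e * ((e - E) * G0 + E * G1' + \<delta>)"
    using a b by (simp add: algebra_simps)
  then have c: "G1 \<le> (e - E) * G0 + E * G1' + \<delta>" using e by simp
  have d: "p * G1 \<le> p * ((e - E) * G0 + E * G1' + \<delta>)" using c p by (intro mult_left_mono) auto
  have "(1 - p) * G0 + p * ((e - E) * G0 + E * G1' + \<delta>) = E * ((1 - p) * G0 + p * G1') + p * \<delta>"
    unfolding E_def by (simp add: algebra_simps)
  then show ?thesis using d unfolding E_def by linarith
qed

lemma disc_measurable:
  assumes K: "finite K"
  shows "f \<in> borel_measurable (PiM K (\<lambda>_. measure_pmf (q :: bool pmf)))"
proof -
  have eq: "measurable (PiM K (\<lambda>_. measure_pmf q)) borel = measurable (count_space (space (PiM K (\<lambda>_. measure_pmf q)))) borel"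
    by (rule measurable_cong_sets[OF sets_PiM_pmf_discrete[OF K] refl])
  show ?thesis unfolding eq by (rule measurable_count_space_eq1[THEN iffD2]) simp
qed

lemma part2:
  fixes N n :: nat and C \<sigma> p B \<epsilon>' :: real and grad :: "'d \<Rightarrow> real ^ 'm::finite"
    and D D' :: "nat \<Rightarrow> 'd list" and S :: "(real ^ 'm) set"
  assumes N: "N \<ge> 1" and n: "n \<ge> 1" and C: "C > 0" and s: "\<sigma> > 0" and p0: "0 < p" and p1: "p \<le> 1"
    and B: "B = p * real n" and e: "\<epsilon>' > 0"
    and len: "\<forall>i<N. length (D i) = n" and nb: "neighbours N D D'" and S: "S \<in> sets borel"
  shows "measure (mechanism N C \<sigma> p B grad D) S
     \<le> (1 + p * (exp \<epsilon>' - 1)) * measure (mechanism N C \<sigma> p B grad D') S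
       + p * hs \<epsilon>' ((2 * C / (real N * B)) / (\<sigma> / sqrt (real N)))"
proof -
  obtain i0 k0 d' where i0: "i0 < N" and k0: "k0 < length (D i0)" and D'i0: "D' i0 = (D i0)[k0 := d']"
    and D'i: "\<And>i. i < N \<Longrightarrow> i \<noteq> i0 \<Longrightarrow> D' i = D i"
    using nb unfolding neighbours_def by blast
  have B0: "0 < B" using B p0 n by simp
  have Npos: "0 < real N" using N by simp
  define s' where "s' = \<sigma> / sqrt (real N)"
  have s': "0 < s'" using s Npos by (simp add: s'_def)
  define \<Delta> where "\<Delta> = 2 * C / (real N * B)"
  have \<Delta>: "0 < \<Delta>" using C Npos B0 by (simp add: \<Delta>_def)
  define \<delta> where "\<delta> = hs \<epsilon>' (\<Delta> / s')"
  have \<delta>0: "0 \<le> \<delta>" unfolding \<delta>_def by (rule hs_nonneg[OF s' \<Delta>])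
  define E where "E = 1 + p * (exp \<epsilon>' - 1)"
  have E1: "1 \<le> E" using p0 e by (simp add: E_def)
  let ?M = "\<lambda>_::nat \<times> nat. measure_pmf (bernoulli_pmf p)"
  let ?K = "{(i, k). i < N \<and> k < length (D i)}"
  have KK: "{(i, k). i < N \<and> k < length (D' i)} = ?K"
  proof -
    have "length (D' i) = length (D i)" if "i < N" for i
      using that D'i[of i] D'i0 by (cases "i = i0") auto
    then show ?thesis by auto
  qed
  have MK: "poisson_masks p N D' = poisson_masks p N D"
    unfolding poisson_masks_def KK ..
  define c0 where "c0 = (i0, k0)"
  define K1 where "K1 = ?K - {c0}"
  have Kins: "?K = insert c0 K1" using i0 k0 by (auto simp: K1_def c0_def)
  have finK1: "finite K1" unfolding K1_def using finite_maskset[of N D] by simp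
  have c0K1: "c0 \<notin> K1" by (simp add: K1_def)
  interpret PS: product_prob_space ?M
    by (rule product_prob_spaceI) (rule measure_pmf.prob_space_axioms)
  define g where "g X b = emeasure (gaussian_vec (meanv C B grad X N b) s') S" for X b
  define Gm where "Gm X b = measure (gaussian_vec (meanv C B grad X N b) s') S" for X b
  have gG: "g X b = ennreal (Gm X b)" for X b
    unfolding g_def Gm_def by (rule finite_measure.emeasure_eq_measure[OF prob_space.axioms(1)[OF prob_space_gaussian_vec[OF s']]])
  have decomp: "emeasure (mechanism N C \<sigma> p B grad X) S
      = (\<integral>\<^sup>+x. g X (x(c0 := True)) * ennreal p + g X (x(c0 := False)) * ennreal (1 - p) \<partial>PiM K1 ?M)"
    if X: "X = D \<or> X = D'" for X
  proof -
    have "emeasure (mechanism N C \<sigma> p B grad X) S = (\<integral>\<^sup>+b. g X b \<partial>poisson_masks p N X)"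
      unfolding g_def s'_def by (rule mech_emeasure[OF s N S])
    also have "poisson_masks p N X = PiM (insert c0 K1) ?M"
      using X MK by (auto simp: poisson_masks_def Kins)
    also have "(\<integral>\<^sup>+b. g X b \<partial>PiM (insert c0 K1) ?M) = (\<integral>\<^sup>+x. \<integral>\<^sup>+y. g X (x(c0 := y)) \<partial>?M c0 \<partial>PiM K1 ?M)"
      by (rule PS.product_nn_integral_insert[OF finK1 c0K1]) (rule disc_measurable, use finK1 in simp)
    also have "\<dots> = (\<integral>\<^sup>+x. g X (x(c0 := True)) * ennreal p + g X (x(c0 := False)) * ennreal (1 - p) \<partial>PiM K1 ?M)"
      using p0 p1 by (intro nn_integral_cong) simp
    finally show ?thesis .
  qed
  have pointwise: "g D (x(c0 := True)) * ennreal p + g D (x(c0 := False)) * ennreal (1 - p)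
      \<le> ennreal E * (g D' (x(c0 := True)) * ennreal p + g D' (x(c0 := False)) * ennreal (1 - p)) + ennreal (p * \<delta>)" for x
  proof -
    define b0 where "b0 = x(c0 := False)"
    define b1 where "b1 = x(c0 := True)"
    have nm1: "meanv C B grad D' N b0 = meanv C B grad D N b0"
      and nm2: "meanv C B grad D N b1 = meanv C B grad D N b0 + (1 / (real N * B)) *\<^sub>R clip C (grad (D i0 ! k0))"
      and nm3: "meanv C B grad D' N b1 = meanv C B grad D N b0 + (1 / (real N * B)) *\<^sub>R clip C (grad d')"
      using neighbour_means[where ?i0.0=i0 and N=N and ?k0.0=k0 and D=D and D'=D' and d'=d' and b=x and C=C and B=B and grad=grad, OF i0 k0 D'i0 D'i]
      unfolding b0_def b1_def c0_def by simp_all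
    have NB: "0 < real N * B" using Npos B0 by simp
    have dist1: "norm (meanv C B grad D N b1 - meanv C B grad D N b0) \<le> \<Delta>"
    proof -
      have "norm (meanv C B grad D N b1 - meanv C B grad D N b0) = (1 / (real N * B)) * norm (clip C (grad (D i0 ! k0)))"
        unfolding nm2 using NB by simp
      also have "\<dots> \<le> (1 / (real N * B)) * C"
        using NB norm_clip[OF C] by (intro mult_left_mono) auto
      also have "\<dots> \<le> \<Delta>" using C NB by (simp add: \<Delta>_def field_simps)
      finally show ?thesis .
    qed
    have dist2: "norm (meanv C B grad D N b1 - meanv C B grad D' N b1) \<le> \<Delta>"
    proof -
      have "meanv C B grad D N b1 - meanv C B grad D' N b1 = (1 / (real N * B)) *\<^sub>R (clip C (grad (D i0 ! k0)) - clip C (grad d'))"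
        unfolding nm2 nm3 by (simp add: algebra_simps)
      then have "norm (meanv C B grad D N b1 - meanv C B grad D' N b1) = (1 / (real N * B)) * norm (clip C (grad (D i0 ! k0)) - clip C (grad d'))"
        using NB by simp
      also have "\<dots> \<le> (1 / (real N * B)) * (C + C)"
      proof (rule mult_left_mono)
        have "norm (clip C (grad (D i0 ! k0)) - clip C (grad d')) \<le> norm (clip C (grad (D i0 ! k0))) + norm (clip C (grad d'))"
          by (rule norm_triangle_ineq4)
        also have "\<dots> \<le> C + C" using norm_clip[OF C] by (intro add_mono) auto
        finally show "norm (clip C (grad (D i0 ! k0)) - clip C (grad d')) \<le> C + C" .
      qed (use NB in simp)
      also have "\<dots> = \<Delta>" by (simp add: \<Delta>_def)
      finally show ?thesis .
    qed
    have h1: "Gm D b1 \<le> exp \<epsilon>' * Gm D b0 + \<delta>"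
      unfolding Gm_def \<delta>_def by (rule hockey[OF s' \<Delta> _ dist1 S]) (use e in simp)
    have h2: "Gm D b1 \<le> exp \<epsilon>' * Gm D' b1 + \<delta>"
      unfolding Gm_def \<delta>_def by (rule hockey[OF s' \<Delta> _ dist2 S]) (use e in simp)
    have G0eq: "Gm D' b0 = Gm D b0" unfolding Gm_def nm1 ..
    have Gnn: "0 \<le> Gm X b" for X b by (simp add: Gm_def)
    have real_ineq: "(1 - p) * Gm D b0 + p * Gm D b1 \<le> E * ((1 - p) * Gm D b0 + p * Gm D' b1) + p * \<delta>"
      unfolding E_def by (rule mix_ineq[OF _ p1 _ Gnn Gnn Gnn h1 h2]) (use p0 e in auto)
    have p1': "0 \<le> 1 - p" using p1 by simp
    have lhs: "g D b1 * ennreal p + g D b0 * ennreal (1 - p) = ennreal ((1 - p) * Gm D b0 + p * Gm D b1)"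
    proof -
      have "ennreal ((1 - p) * Gm D b0 + p * Gm D b1) = ennreal ((1 - p) * Gm D b0) + ennreal (p * Gm D b1)"
        using p0 p1' Gnn by (intro ennreal_plus) auto
      also have "\<dots> = ennreal (1 - p) * ennreal (Gm D b0) + ennreal p * ennreal (Gm D b1)"
        using p0 p1' Gnn by (simp only: ennreal_mult[OF p1' Gnn] ennreal_mult[OF less_imp_le[OF p0] Gnn])
      finally show ?thesis unfolding gG by (simp only: mult.commute add.commute)
    qed
    have rhs: "ennreal E * (g D' b1 * ennreal p + g D' b0 * ennreal (1 - p)) + ennreal (p * \<delta>)
        = ennreal (E * ((1 - p) * Gm D b0 + p * Gm D' b1) + p * \<delta>)"
    proof -
      have in1: "ennreal ((1 - p) * Gm D b0 + p * Gm D' b1) = g D' b1 * ennreal p + g D' b0 * ennreal (1 - p)"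
      proof -
        have "ennreal ((1 - p) * Gm D b0 + p * Gm D' b1) = ennreal ((1 - p) * Gm D b0) + ennreal (p * Gm D' b1)"
          using p0 p1' Gnn by (intro ennreal_plus) auto
        also have "\<dots> = ennreal (1 - p) * ennreal (Gm D b0) + ennreal p * ennreal (Gm D' b1)"
          by (simp only: ennreal_mult[OF p1' Gnn] ennreal_mult[OF less_imp_le[OF p0] Gnn])
        finally show ?thesis unfolding gG G0eq by (simp only: mult.commute add.commute)
      qed
      have nn1: "0 \<le> (1 - p) * Gm D b0 + p * Gm D' b1" using p0 p1' Gnn by simp
      have "ennreal (E * ((1 - p) * Gm D b0 + p * Gm D' b1) + p * \<delta>)
          = ennreal (E * ((1 - p) * Gm D b0 + p * Gm D' b1)) + ennreal (p * \<delta>)"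
        using nn1 E1 p0 \<delta>0 by (intro ennreal_plus) auto
      also have "ennreal (E * ((1 - p) * Gm D b0 + p * Gm D' b1)) = ennreal E * ennreal ((1 - p) * Gm D b0 + p * Gm D' b1)"
        using E1 nn1 by (intro ennreal_mult) auto
      finally show ?thesis unfolding in1 by simp
    qed
    show ?thesis
      unfolding b0_def[symmetric] b1_def[symmetric] lhs rhs using real_ineq by (rule ennreal_leI)
  qed
  have "emeasure (mechanism N C \<sigma> p B grad D) S
      \<le> (\<integral>\<^sup>+x. ennreal E * (g D' (x(c0 := True)) * ennreal p + g D' (x(c0 := False)) * ennreal (1 - p)) + ennreal (p * \<delta>) \<partial>PiM K1 ?M)"
    unfolding decomp[of D, simplified] by (rule nn_integral_mono) (rule pointwise)
  also have "\<dots> = ennreal E * (\<integral>\<^sup>+x. g D' (x(c0 := True)) * ennreal p + g D' (x(c0 := False)) * ennreal (1 - p) \<partial>PiM K1 ?M)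
      + ennreal (p * \<delta>)"
  proof -
    interpret P1: prob_space "PiM K1 ?M" by (rule prob_space_PiM) (rule measure_pmf.prob_space_axioms)
    show ?thesis
      by (subst nn_integral_add) (auto intro!: disc_measurable finK1 simp: nn_integral_cmult disc_measurable finK1 P1.emeasure_space_1)
  qed
  also have "(\<integral>\<^sup>+x. g D' (x(c0 := True)) * ennreal p + g D' (x(c0 := False)) * ennreal (1 - p) \<partial>PiM K1 ?M)
      = emeasure (mechanism N C \<sigma> p B grad D') S"
    by (rule decomp[symmetric]) simp
  finally have ineq: "emeasure (mechanism N C \<sigma> p B grad D) S \<le> ennreal E * emeasure (mechanism N C \<sigma> p B grad D') S + ennreal (p * \<delta>)" .
  have fin: "emeasure (mechanism N C \<sigma> p B grad X) S \<le> 1" if "X = D \<or> X = D'" for X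
  proof -
    have "emeasure (mechanism N C \<sigma> p B grad X) S = (\<integral>\<^sup>+b. g X b \<partial>poisson_masks p N X)"
      unfolding g_def s'_def by (rule mech_emeasure[OF s N S])
    also have "\<dots> \<le> (\<integral>\<^sup>+b. 1 \<partial>poisson_masks p N X)"
      unfolding g_def by (intro nn_integral_mono prob_space.emeasure_le_1 prob_space_gaussian_vec s')
    also have "\<dots> = 1"
      unfolding poisson_masks_def
      by (simp add: prob_space.emeasure_space_1[OF prob_space_PiM] measure_pmf.prob_space_axioms)
    finally show ?thesis .
  qed
  have finD': "emeasure (mechanism N C \<sigma> p B grad D') S \<noteq> \<top>"
    using fin[of D'] by (auto simp: top_unique)
  have "measure (mechanism N C \<sigma> p B grad D) S \<le> enn2real (ennreal E * emeasure (mechanism N C \<sigma> p B grad D') S + ennreal (p * \<delta>))"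
    unfolding measure_def using ineq finD'
    by (intro enn2real_mono) (auto simp: less_top[symmetric] ennreal_mult_eq_top_iff)
  also have "\<dots> = E * measure (mechanism N C \<sigma> p B grad D') S + p * \<delta>"
    using finD' E1 \<delta>0 p0
    by (subst enn2real_plus) (auto simp: less_top[symmetric] ennreal_mult_eq_top_iff enn2real_mult measure_def)
  finally show ?thesis unfolding E_def \<delta>_def \<Delta>_def s'_def .
qed

theorem theorem1:
  fixes N n :: nat and C \<sigma> p B \<epsilon>' :: real
    and grad :: "'d \<Rightarrow> real ^ 'm::finite"
  assumes "N \<ge> 1" and "n \<ge> 1" and "C > 0" and "\<sigma> > 0" and "0 < p" and "p \<le> 1"
    and "B = p * real n" and "\<epsilon>' > 0"
  shows "(\<forall>gbar :: nat \<Rightarrow> real ^ 'm.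
            distr (shared_rand N \<sigma>) borel (aggregate N \<sigma> gbar)
              = gaussian_vec ((1 / real N) *\<^sub>R (\<Sum>i<N. gbar i)) (\<sigma> / sqrt (real N)))
       \<and> (\<forall>D D' S. (\<forall>i<N. length (D i) = n) \<longrightarrow> neighbours N D D' \<longrightarrow> S \<in> sets borel \<longrightarrow>
            measure (mechanism N C \<sigma> p B grad D) S
              \<le> exp (ln (1 + p * (exp \<epsilon>' - 1))) * measure (mechanism N C \<sigma> p B grad D') S
                + (p * Phi (C / (\<sigma> * B * sqrt (real N)) - \<epsilon>' * \<sigma> * B * sqrt (real N) / (2 * C))
                   - p * exp \<epsilon>' * Phi (- C / (\<sigma> * B * sqrt (real N)) - \<epsilon>' * \<sigma> * B * sqrt (real N) / (2 * C))))"
proof (intro conjI allI impI)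
  have s: "0 < \<sigma>" and N: "N \<ge> 1" using assms by auto
  fix gbar :: "nat \<Rightarrow> real ^ 'm"
  show "distr (shared_rand N \<sigma>) borel (aggregate N \<sigma> gbar)
      = gaussian_vec ((1 / real N) *\<^sub>R (\<Sum>i<N. gbar i)) (\<sigma> / sqrt (real N))"
    by (rule part1[OF s N])
next
  fix D D' :: "nat \<Rightarrow> 'd list" and S :: "(real ^ 'm) set"
  assume len: "\<forall>i<N. length (D i) = n" and nb: "neighbours N D D'" and S: "S \<in> sets borel"
  have B0: "0 < B" using assms by simp
  have Npos: "0 < real N" using assms by simp
  have sq: "0 < sqrt (real N)" using Npos by simp
  have E0: "0 < 1 + p * (exp \<epsilon>' - 1)" using assms by (simp add: add_pos_nonneg)
  have r: "(2 * C / (real N * B)) / (\<sigma> / sqrt (real N)) = 2 * C / (\<sigma> * B * sqrt (real N))"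
  proof -
    have "real N = sqrt (real N) * sqrt (real N)" by simp
    then show ?thesis using B0 sq assms by (simp add: field_simps)
  qed
  have r1: "(2 * C / (\<sigma> * B * sqrt (real N))) / 2 = C / (\<sigma> * B * sqrt (real N))" by simp
  have r2: "\<epsilon>' / (2 * C / (\<sigma> * B * sqrt (real N))) = \<epsilon>' * \<sigma> * B * sqrt (real N) / (2 * C)"
    by (simp add: field_simps)
  have r3: "- (2 * C / (\<sigma> * B * sqrt (real N))) / 2 = - C / (\<sigma> * B * sqrt (real N))" by simp
  have main: "measure (mechanism N C \<sigma> p B grad D) S
     \<le> (1 + p * (exp \<epsilon>' - 1)) * measure (mechanism N C \<sigma> p B grad D') S
       + p * hs \<epsilon>' ((2 * C / (real N * B)) / (\<sigma> / sqrt (real N)))"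
    by (rule part2) (use assms len nb S in auto)
  have hs_eq: "p * hs \<epsilon>' ((2 * C / (real N * B)) / (\<sigma> / sqrt (real N)))
      = p * Phi (C / (\<sigma> * B * sqrt (real N)) - \<epsilon>' * \<sigma> * B * sqrt (real N) / (2 * C))
        - p * exp \<epsilon>' * Phi (- C / (\<sigma> * B * sqrt (real N)) - \<epsilon>' * \<sigma> * B * sqrt (real N) / (2 * C))"
    unfolding r hs_def r1 r2 r3 by (simp add: algebra_simps)
  show "measure (mechanism N C \<sigma> p B grad D) S
     \<le> exp (ln (1 + p * (exp \<epsilon>' - 1))) * measure (mechanism N C \<sigma> p B grad D') S
       + (p * Phi (C / (\<sigma> * B * sqrt (real N)) - \<epsilon>' * \<sigma> * B * sqrt (real N) / (2 * C))
          - p * exp \<epsilon>' * Phi (- C / (\<sigma> * B * sqrt (real N)) - \<epsilon>' * \<sigma> * B * sqrt (real N) / (2 * C)))"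
    using main unfolding hs_eq exp_ln[OF E0] .
qed

end
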